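(* Let $W$ be a Brownian motion and $X$ the strong solution of $dX_t=b(X_t)dt+\sigma(X_t)dW_t$, $X_0=\xi\in\mathbb{R}$, where $\inf\sigma(K)>0$ for every compact $K\subset\mathbb{R}$, $\sigma$ is Lipschitz, and $b$ is bounded Borel measurable. Let $AP$ be a finite set of atomic formulas interpreted by Borel sets such that every propositional formula $p$ satisfies $X(\omega),t\models p\Leftrightarrow X_t(\omega)\in B_p$ for some $B_p$ that is a union of a finite pairwise separated family of positive intervals on $\mathbb{R}$ (possibly $\emptyset$ or $\mathbb{R}$). Let $p$ be a propositional formula. Then for every $t\in(0,\infty)$, $\chi^{(n)}_p(\omega,t)\to\chi_p(\omega,t)$ almost surely; in particular $\mathbb{P}(\omega : X(\omega),\Lambda_n(t)\models_n p)\to\mathbb{P}(\omega : X(\omega),t\models p)$.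
   Context: Propositional formulas: atomic formulas closed under $\lnot$ and $\wedge$. Positive interval on $\mathbb{R}$: $\langle x,y\rangle$ with $x<y$, endpoints open or closed; pairwise separated means $\overline{B_i}\cap\overline{B_j}=\emptyset$ for $i\neq j$. For $t\in\mathbb{N}/n:=\{k/n:k\in\mathbb{N}\}$, $X(\omega),t\models_n p$ iff $X_t(\omega)\in B_p$. $\Lambda_n(t):=\lfloor nt\rfloor/n$; $\chi_p(\omega,t)=1$ iff $X(\omega),t\models p$ (else $0$); $\chi^{(n)}_p(\omega,t)=1$ iff $X(\omega),\Lambda_n(t)\models_n p$ (else $0$). *)

theory Defs
  imports "HOL-Probability.Probability"
begin

definition brownian_motion :: "'w measure \<Rightarrow> (real \<Rightarrow> 'w \<Rightarrow> real) \<Rightarrow> bool" where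
  "brownian_motion M W \<longleftrightarrow>
     prob_space M \<and>
     (\<forall>t\<ge>0. W t \<in> borel_measurable M) \<and>
     (\<forall>\<omega>\<in>space M. W 0 \<omega> = 0) \<and>
     (\<forall>\<omega>\<in>space M. continuous_on {0..} (\<lambda>t. W t \<omega>)) \<and>
     (\<forall>s t. 0 \<le> s \<longrightarrow> s < t \<longrightarrow>
        distributed M lborel (\<lambda>\<omega>. W t \<omega> - W s \<omega>)
          (\<lambda>x. ennreal (normal_density 0 (sqrt (t - s)) x))) \<and>
     (\<forall>(ts :: nat \<Rightarrow> real) k. strict_mono ts \<longrightarrow> 0 \<le> ts 0 \<longrightarrow>
        prob_space.indep_vars M (\<lambda>_. borel) (\<lambda>i \<omega>. W (ts (Suc i)) \<omega> - W (ts i) \<omega>) {..<k})"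

definition bm_filtration :: "'w measure \<Rightarrow> (real \<Rightarrow> 'w \<Rightarrow> real) \<Rightarrow> real \<Rightarrow> 'w measure" where
  "bm_filtration M W s = sigma (space M)
     ({W r -` B \<inter> space M | r B. 0 \<le> r \<and> r \<le> s \<and> B \<in> sets borel} \<union> null_sets M)"

text \<open>Ito integral of a continuous adapted integrand H against W on [0,t], realised as the
  limit in probability of left-point Riemann sums along the dyadic partitions
  (k/2^m) of [0,t].\<close>

definition ito_riemann_sum ::
  "(real \<Rightarrow> 'w \<Rightarrow> real) \<Rightarrow> (real \<Rightarrow> 'w \<Rightarrow> real) \<Rightarrow> real \<Rightarrow> nat \<Rightarrow> 'w \<Rightarrow> real" where
  "ito_riemann_sum W H t m \<omega> =
     (\<Sum>k < nat \<lceil>2 ^ m * t\<rceil>.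
        H (real k / 2 ^ m) \<omega> * (W (min (real (Suc k) / 2 ^ m) t) \<omega> - W (real k / 2 ^ m) \<omega>))"

definition converges_in_prob :: "'w measure \<Rightarrow> (nat \<Rightarrow> 'w \<Rightarrow> real) \<Rightarrow> ('w \<Rightarrow> real) \<Rightarrow> bool" where
  "converges_in_prob M Y Z \<longleftrightarrow>
     (\<forall>\<epsilon>>0. (\<lambda>m. measure M {\<omega> \<in> space M. \<bar>Y m \<omega> - Z \<omega>\<bar> > \<epsilon>}) \<longlonglongrightarrow> 0)"

text \<open>X is a strong solution of dX = b(X) dt + sigma(X) dW, X_0 = xi (deterministic):
  continuous, adapted to the augmented filtration of W, and for every t >= 0
  X_t = xi + int_0^t b(X_s) ds + int_0^t sigma(X_s) dW_s  almost surely
  (the equality being expressed by the Riemann-sum characterisation of the Ito integral).\<close>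

definition strong_solution ::
  "'w measure \<Rightarrow> (real \<Rightarrow> 'w \<Rightarrow> real) \<Rightarrow> (real \<Rightarrow> real) \<Rightarrow> (real \<Rightarrow> real) \<Rightarrow> real
    \<Rightarrow> (real \<Rightarrow> 'w \<Rightarrow> real) \<Rightarrow> bool" where
  "strong_solution M W b \<sigma> \<xi> X \<longleftrightarrow>
     (\<forall>\<omega>\<in>space M. X 0 \<omega> = \<xi>) \<and>
     (\<forall>\<omega>\<in>space M. continuous_on {0..} (\<lambda>t. X t \<omega>)) \<and>
     (\<forall>t\<ge>0. X t \<in> borel_measurable (bm_filtration M W t)) \<and>
     (\<forall>t\<ge>0. converges_in_prob M
        (ito_riemann_sum W (\<lambda>s \<omega>. \<sigma> (X s \<omega>)) t)
        (\<lambda>\<omega>. X t \<omega> - \<xi> - (LBINT s=0..t. b (X s \<omega>))))"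

datatype 'a pform = Atom 'a | Neg "'a pform" | Conj "'a pform" "'a pform"

primrec psem :: "('a \<Rightarrow> real set) \<Rightarrow> 'a pform \<Rightarrow> real set" where
  "psem I (Atom a) = I a"
| "psem I (Neg p) = - psem I p"
| "psem I (Conj p q) = psem I p \<inter> psem I q"

definition models :: "('a \<Rightarrow> real set) \<Rightarrow> (real \<Rightarrow> 'w \<Rightarrow> real) \<Rightarrow> 'w \<Rightarrow> real \<Rightarrow> 'a pform \<Rightarrow> bool" where
  "models I X \<omega> t p \<longleftrightarrow> X t \<omega> \<in> psem I p"

text \<open>A positive interval <x,y> with x < y (endpoints in the extended reals, so that
  half-lines and the whole line are included), each finite endpoint open or closed.\<close>

definition pos_interval :: "real set \<Rightarrow> bool" where
  "pos_interval S \<longleftrightarrow> (\<exists>(x::ereal) (y::ereal) lc rc. x < y \<and>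
     S = {r. (x < ereal r \<or> (lc \<and> x = ereal r)) \<and> (ereal r < y \<or> (rc \<and> ereal r = y))})"

definition sep_interval_union :: "real set \<Rightarrow> bool" where
  "sep_interval_union B \<longleftrightarrow> (\<exists>F. finite F \<and> (\<forall>S\<in>F. pos_interval S) \<and>
     (\<forall>S\<in>F. \<forall>T\<in>F. S \<noteq> T \<longrightarrow> closure S \<inter> closure T = {}) \<and> B = \<Union>F)"

definition Lambda :: "nat \<Rightarrow> real \<Rightarrow> real" where
  "Lambda n t = real_of_int \<lfloor>real n * t\<rfloor> / real n"

definition chi :: "('a \<Rightarrow> real set) \<Rightarrow> (real \<Rightarrow> 'w \<Rightarrow> real) \<Rightarrow> 'a pform \<Rightarrow> 'w \<Rightarrow> real \<Rightarrow> real" where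
  "chi I X p \<omega> t = (if models I X \<omega> t p then 1 else 0)"

text \<open>chi^(n)_p(omega,t) = 1 iff X(omega), Lambda_n(t) |=_n p, i.e. X_{Lambda_n t} in B_p.\<close>

definition chi_n :: "('a \<Rightarrow> real set) \<Rightarrow> (real \<Rightarrow> 'w \<Rightarrow> real) \<Rightarrow> nat \<Rightarrow> 'a pform \<Rightarrow> 'w \<Rightarrow> real \<Rightarrow> real" where
  "chi_n I X n p \<omega> t = (if models I X \<omega> (Lambda n t) p then 1 else 0)"

end

theory Submission
  imports Defs
begin

locale bm = fixes M :: "'w measure" and W :: "real \<Rightarrow> 'w \<Rightarrow> real"
  assumes BM: "brownian_motion M W"
begin

sublocale prob_space M using BM unfolding brownian_motion_def by auto

lemma W_meas[measurable]: "0 \<le> t \<Longrightarrow> W t \<in> borel_measurable M"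
  using BM unfolding brownian_motion_def by auto

lemma W0: "\<omega> \<in> space M \<Longrightarrow> W 0 \<omega> = 0"
  using BM unfolding brownian_motion_def by auto

lemma W_distr: "0 \<le> s \<Longrightarrow> s < t \<Longrightarrow> distributed M lborel (\<lambda>\<omega>. W t \<omega> - W s \<omega>)
          (\<lambda>x. ennreal (normal_density 0 (sqrt (t - s)) x))"
  using BM unfolding brownian_motion_def by auto

lemma W_indep: "strict_mono (ts :: nat \<Rightarrow> real) \<Longrightarrow> 0 \<le> ts 0 \<Longrightarrow>
        indep_vars (\<lambda>_. borel) (\<lambda>i \<omega>. W (ts (Suc i)) \<omega> - W (ts i) \<omega>) {..<k}"
  using BM unfolding brownian_motion_def by auto

abbreviation F where "F s \<equiv> bm_filtration M W s"

definition gens where "gens s = {W r -` B \<inter> space M | r B. 0 \<le> r \<and> r \<le> s \<and> B \<in> sets borel} \<union> null_sets M"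

lemma gens_sub: "gens s \<subseteq> sets M"
  unfolding gens_def by auto

lemma gens_pow: "gens s \<subseteq> Pow (space M)"
  using gens_sub[of s] sets.sets_into_space by blast

lemma F_eq: "F s = sigma (space M) (gens s)"
  unfolding bm_filtration_def gens_def by simp

lemma space_F[simp]: "space (F s) = space M"
  unfolding F_eq using gens_pow by simp

lemma sets_F: "sets (F s) = sigma_sets (space M) (gens s)"
  unfolding F_eq using gens_pow by simp

lemma sets_F_sub: "sets (F s) \<subseteq> sets M"
  unfolding sets_F using gens_sub by (simp add: sets.sigma_sets_subset)

lemma subalg_F: "subalgebra M (F s)"
  unfolding subalgebra_def using sets_F_sub by simp

lemma F_meas_M: "f \<in> measurable (F s) N \<Longrightarrow> f \<in> measurable M N"
  using measurable_from_subalg[OF subalg_F] by blast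

lemma gens_mono: "s \<le> s' \<Longrightarrow> gens s \<subseteq> gens s'"
  unfolding gens_def by fastforce

lemma sets_F_mono: "s \<le> s' \<Longrightarrow> sets (F s) \<subseteq> sets (F s')"
  unfolding sets_F by (intro sigma_sets_mono') (use gens_mono in auto)

lemma F_mono_meas: "s \<le> s' \<Longrightarrow> f \<in> measurable (F s) N \<Longrightarrow> f \<in> measurable (F s') N"
  apply (rule measurable_from_subalg[of _ "F s"])
  unfolding subalgebra_def using sets_F_mono by auto

lemma W_adapted: "0 \<le> r \<Longrightarrow> r \<le> s \<Longrightarrow> W r \<in> borel_measurable (F s)"
proof (rule measurableI)
  fix x assume "x \<in> space (F s)" then show "W r x \<in> space borel" by simp
next
  fix B :: "real set" assume "0 \<le> r" "r \<le> s" "B \<in> sets borel"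
  then have "W r -` B \<inter> space M \<in> gens s" unfolding gens_def by blast
  then show "W r -` B \<inter> space (F s) \<in> sets (F s)" unfolding sets_F by auto
qed

lemma null_F: "N \<in> null_sets M \<Longrightarrow> N \<in> sets (F s)"
  unfolding sets_F gens_def by auto

end

lemma list_pred_sets:
  assumes "\<And>p. p \<in> set L \<Longrightarrow> {x\<in>space N. Q p x} \<in> sets N"
  shows "{x\<in>space N. \<forall>p\<in>set L. Q p x} \<in> sets N"
  using assms
proof (induction L)
  case Nil then show ?case by simp
next
  case (Cons a L)
  have "{x\<in>space N. \<forall>p\<in>set (a#L). Q p x} = {x\<in>space N. Q a x} \<inter> {x\<in>space N. \<forall>p\<in>set L. Q p x}"
    by auto
  then show ?case using Cons by auto
qed

context bm begin

definition cyl :: "(real \<times> real set) list \<Rightarrow> 'w set" where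
  "cyl L = {\<omega>\<in>space M. \<forall>(r,B)\<in>set L. W r \<omega> \<in> B}"

definition valid :: "real \<Rightarrow> (real \<times> real set) list \<Rightarrow> bool" where
  "valid s L \<longleftrightarrow> (\<forall>(r,B)\<in>set L. 0 \<le> r \<and> r \<le> s \<and> B \<in> sets borel)"

lemma cyl_sets: "valid s L \<Longrightarrow> cyl L \<in> sets M"
  unfolding cyl_def valid_def
  apply (rule list_pred_sets)
  apply clarsimp
  subgoal for a b
  proof -
    assume h: "\<forall>x\<in>set L. case x of (r, B) \<Rightarrow> 0 \<le> r \<and> r \<le> s \<and> B \<in> sets borel" "(a, b) \<in> set L"
    then have "0 \<le> a" "b \<in> sets borel" by auto
    then have "W a -` b \<inter> space M \<in> events" by (intro measurable_sets[OF W_meas])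
    moreover have "{\<omega> \<in> space M. W a \<omega> \<in> b} = W a -` b \<inter> space M" by auto
    ultimately show ?thesis by simp
  qed
  done

lemma cyl_indep:
  assumes vL: "valid s L" and s: "0 \<le> s" "s < u" and C: "C \<in> sets borel"
  shows "prob (cyl L \<inter> ((\<lambda>\<omega>. W u \<omega> - W s \<omega>) -` C \<inter> space M)) =
         prob (cyl L) * prob ((\<lambda>\<omega>. W u \<omega> - W s \<omega>) -` C \<inter> space M)"
proof -
  define T where "T = insert 0 (insert s (fst ` set L))"
  have finT: "finite T" unfolding T_def by auto
  have T01: "\<And>r. r \<in> T \<Longrightarrow> 0 \<le> r \<and> r \<le> s"
    using vL s unfolding T_def valid_def by auto
  define xs where "xs = sorted_list_of_set T"
  define n where "n = length xs"
  have setxs: "set xs = T" unfolding xs_def using finT by simp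
  have sxs: "sorted_wrt (<) xs" unfolding xs_def by (rule strict_sorted_list_of_set)
  have "s \<in> T" unfolding T_def by simp
  then obtain N where N: "N < n" "xs ! N = s" unfolding n_def using setxs by (metis in_set_conv_nth)
  have Nn: "n = Suc N"
  proof (rule ccontr)
    assume "n \<noteq> Suc N"
    then have "Suc N < n" using N by auto
    then have "xs ! N < xs ! Suc N" using sorted_wrt_nth_less[OF sxs, of N "Suc N"] unfolding n_def by blast
    moreover have "xs ! Suc N \<in> set xs" using \<open>Suc N < n\<close> unfolding n_def by (intro nth_mem) simp
    ultimately show False using T01[of "xs ! Suc N"] N(2) setxs by simp
  qed
  have "0 \<in> T" unfolding T_def by simp
  then obtain j0 where j0: "j0 < n" "xs ! j0 = 0" unfolding n_def using setxs by (metis in_set_conv_nth)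
  have x0: "xs ! 0 = 0"
  proof (cases "j0 = 0")
    case True then show ?thesis using j0 by simp
  next
    case False
    then have "0 < j0" by simp
    then have "xs ! 0 < xs ! j0" using sorted_wrt_nth_less[OF sxs, of 0 j0] j0(1) unfolding n_def by blast
    moreover have "0 < length xs" using j0(1) unfolding n_def by linarith
    then have "xs ! 0 \<in> set xs" by (rule nth_mem)
    ultimately show ?thesis using T01[of "xs ! 0"] j0(2) setxs by simp
  qed
  define \<tau> where "\<tau> i = (if i < n then xs ! i else u + real (i - n))" for i
  have smono: "strict_mono \<tau>"
  proof (rule strict_mono_Suc_iff[THEN iffD2], intro allI)
    fix i
    show "\<tau> i < \<tau> (Suc i)"
    proof (cases "Suc i < n")
      case True then show ?thesis unfolding \<tau>_def using sorted_wrt_nth_less[OF sxs, of i "Suc i"] n_def by auto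
    next
      case False
      show ?thesis
      proof (cases "i < n")
        case True
        then have "i = N" using False Nn by auto
        then show ?thesis unfolding \<tau>_def using N Nn s by auto
      next
        case False2: False
        then show ?thesis unfolding \<tau>_def by auto
      qed
    qed
  qed
  have tau0: "\<tau> 0 = 0" unfolding \<tau>_def using x0 Nn by simp
  have tauN: "\<tau> N = s" unfolding \<tau>_def using N by simp
  have tauSN: "\<tau> (Suc N) = u" unfolding \<tau>_def using Nn by simp
  define D where "D i \<omega> = W (\<tau> (Suc i)) \<omega> - W (\<tau> i) \<omega>" for i \<omega>
  have ind: "indep_vars (\<lambda>_. borel) D {..<n}"
    unfolding D_def using W_indep[OF smono] tau0 by simp
  have ind2: "indep_var (PiM {..<N} (\<lambda>_. borel)) (\<lambda>\<omega>. restrict (\<lambda>i. D i \<omega>) {..<N})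
                        (PiM {N} (\<lambda>_. borel)) (\<lambda>\<omega>. restrict (\<lambda>i. D i \<omega>) {N})"
    by (rule indep_var_restrict[OF ind]) (auto simp: Nn)
  define idx where "idx r = (SOME j. j < n \<and> xs ! j = r)" for r
  have idx: "idx r < n \<and> xs ! idx r = r" if "r \<in> T" for r
  proof -
    have "\<exists>j. j < n \<and> xs ! j = r" using that setxs n_def by (metis in_set_conv_nth)
    then show ?thesis unfolding idx_def by (rule someI_ex)
  qed
  define S1 where "S1 = {f \<in> space (PiM {..<N} (\<lambda>_. borel::real measure)).
                         \<forall>(r,B)\<in>set L. (\<Sum>i<idx r. f i) \<in> B}"
  define S2 where "S2 = {f \<in> space (PiM {N} (\<lambda>_. borel::real measure)). f N \<in> C}"
  have S1: "S1 \<in> sets (PiM {..<N} (\<lambda>_. borel))"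
    unfolding S1_def
  proof (rule list_pred_sets, clarify)
    fix r B assume rB: "(r, B) \<in> set L"
    then have "r \<in> T" unfolding T_def by force
    then have "idx r \<le> N" using idx Nn by fastforce
    have "(\<lambda>f. \<Sum>i<idx r. f i) \<in> borel_measurable (PiM {..<N} (\<lambda>_. borel::real measure))"
      using \<open>idx r \<le> N\<close> by (intro borel_measurable_sum) auto
    moreover have "B \<in> sets borel" using rB vL unfolding valid_def by auto
    ultimately have "(\<lambda>f. \<Sum>i<idx r. f i) -` B \<inter> space (Pi\<^sub>M {..<N} (\<lambda>_. borel::real measure)) \<in> sets (Pi\<^sub>M {..<N} (\<lambda>_. borel))"
      by (rule measurable_sets)
    moreover have "{x \<in> space (Pi\<^sub>M {..<N} (\<lambda>_. borel::real measure)). (\<Sum>i<idx r. x i) \<in> B} = (\<lambda>f. \<Sum>i<idx r. f i) -` B \<inter> space (Pi\<^sub>M {..<N} (\<lambda>_. borel::real measure))"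
      by auto
    ultimately show "{x \<in> space (Pi\<^sub>M {..<N} (\<lambda>_. borel)). (\<Sum>i<idx r. x i) \<in> B} \<in> sets (Pi\<^sub>M {..<N} (\<lambda>_. borel))"
      by simp
  qed
  have S2: "S2 \<in> sets (PiM {N} (\<lambda>_. borel))"
    unfolding S2_def using C by measurable
  have e1: "(\<lambda>\<omega>. restrict (\<lambda>i. D i \<omega>) {..<N}) -` S1 \<inter> space M = cyl L"
  proof -
    { fix \<omega> r B assume \<omega>: "\<omega> \<in> space M" and rB: "(r, B) \<in> set L"
      then have "r \<in> T" unfolding T_def by force
      then have ir: "idx r < n" "xs ! idx r = r" using idx by auto
      have "(\<Sum>i<idx r. restrict (\<lambda>i. D i \<omega>) {..<N} i) = (\<Sum>i<idx r. D i \<omega>)"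
        using ir Nn by (intro sum.cong) auto
      also have "\<dots> = W (\<tau> (idx r)) \<omega> - W (\<tau> 0) \<omega>"
        unfolding D_def by (rule sum_lessThan_telescope)
      also have "\<dots> = W r \<omega>" using ir tau0 W0[OF \<omega>] unfolding \<tau>_def by simp
      finally have "(\<Sum>i<idx r. restrict (\<lambda>i. D i \<omega>) {..<N} i) = W r \<omega>" . }
    then show ?thesis unfolding S1_def cyl_def by (auto simp: space_PiM)
  qed
  have e2: "(\<lambda>\<omega>. restrict (\<lambda>i. D i \<omega>) {N}) -` S2 \<inter> space M = (\<lambda>\<omega>. W u \<omega> - W s \<omega>) -` C \<inter> space M"
    unfolding S2_def D_def using tauN tauSN by (auto simp: space_PiM)
  have "prob ((\<lambda>x. (restrict (\<lambda>i. D i x) {..<N}, restrict (\<lambda>i. D i x) {N})) -` (S1 \<times> S2) \<inter> space M)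
     = prob ((\<lambda>\<omega>. restrict (\<lambda>i. D i \<omega>) {..<N}) -` S1 \<inter> space M) * prob ((\<lambda>\<omega>. restrict (\<lambda>i. D i \<omega>) {N}) -` S2 \<inter> space M)"
    by (rule indep_varD[OF ind2 S1 S2])
  moreover have "(\<lambda>x. (restrict (\<lambda>i. D i x) {..<N}, restrict (\<lambda>i. D i x) {N})) -` (S1 \<times> S2) \<inter> space M
     = ((\<lambda>\<omega>. restrict (\<lambda>i. D i \<omega>) {..<N}) -` S1 \<inter> space M) \<inter> ((\<lambda>\<omega>. restrict (\<lambda>i. D i \<omega>) {N}) -` S2 \<inter> space M)"
    by auto
  ultimately show ?thesis using e1 e2 by simp
qed

end

context bm begin

definition Pcyl where "Pcyl s = {cyl L | L. valid s L} \<union> null_sets M"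

definition Efam where "Efam s u = {(\<lambda>\<omega>. W u \<omega> - W s \<omega>) -` C \<inter> space M | C. C \<in> sets borel}"

lemma cyl_append: "cyl (L1 @ L2) = cyl L1 \<inter> cyl L2"
  unfolding cyl_def by auto

lemma valid_append: "valid s L1 \<Longrightarrow> valid s L2 \<Longrightarrow> valid s (L1 @ L2)"
  unfolding valid_def by auto

lemma Pcyl_Int_stable: "Int_stable (Pcyl s)"
proof (rule Int_stableI)
  fix a b assume a: "a \<in> Pcyl s" and b: "b \<in> Pcyl s"
  have ev: "x \<in> sets M" if "x \<in> Pcyl s" for x
    using that cyl_sets unfolding Pcyl_def by auto
  show "a \<inter> b \<in> Pcyl s"
  proof (cases "a \<in> null_sets M \<or> b \<in> null_sets M")
    case True
    then show ?thesis using ev[OF a] ev[OF b] null_set_Int1 null_set_Int2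
      unfolding Pcyl_def by blast
  next
    case False
    then obtain L1 L2 where "a = cyl L1" "valid s L1" "b = cyl L2" "valid s L2"
      using a b unfolding Pcyl_def by auto
    then show ?thesis unfolding Pcyl_def using cyl_append valid_append by blast
  qed
qed

lemma Efam_Int_stable: "Int_stable (Efam s u)"
proof (rule Int_stableI)
  fix a b assume "a \<in> Efam s u" "b \<in> Efam s u"
  then obtain C1 C2 where "C1 \<in> sets borel" "C2 \<in> sets borel"
    "a = (\<lambda>\<omega>. W u \<omega> - W s \<omega>) -` C1 \<inter> space M" "b = (\<lambda>\<omega>. W u \<omega> - W s \<omega>) -` C2 \<inter> space M"
    unfolding Efam_def by auto
  then show "a \<inter> b \<in> Efam s u" unfolding Efam_def
    by (intro CollectI exI[of _ "C1 \<inter> C2"]) auto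
qed

lemma Efam_sets: "0 \<le> s \<Longrightarrow> s < u \<Longrightarrow> Efam s u \<subseteq> events"
  unfolding Efam_def by auto

lemma indep_Pcyl: assumes s: "0 \<le> s" "s < u" shows "indep_set (Pcyl s) (Efam s u)"
proof (subst indep_sets2_eq, intro conjI ballI)
  show "Pcyl s \<subseteq> events" using cyl_sets unfolding Pcyl_def by auto
  show "Efam s u \<subseteq> events" using Efam_sets s by auto
  fix a b assume a: "a \<in> Pcyl s" and b: "b \<in> Efam s u"
  then obtain C where C: "C \<in> sets borel" "b = (\<lambda>\<omega>. W u \<omega> - W s \<omega>) -` C \<inter> space M"
    unfolding Efam_def by auto
  have bev: "b \<in> events" using b Efam_sets s by auto
  show "prob (a \<inter> b) = prob a * prob b"
  proof (cases "a \<in> null_sets M")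
    case True
    then have "a \<inter> b \<in> null_sets M" using bev null_set_Int2 by blast
    then show ?thesis using True by (simp add: measure_eq_0_null_sets)
  next
    case False
    then obtain L where "a = cyl L" "valid s L" using a unfolding Pcyl_def by auto
    then show ?thesis using cyl_indep[OF _ s C(1)] C(2) by simp
  qed
qed

lemma sets_F_Pcyl: "sets (F s) \<subseteq> sigma_sets (space M) (Pcyl s)"
proof -
  have "gens s \<subseteq> Pcyl s"
  proof
    fix x assume "x \<in> gens s"
    then show "x \<in> Pcyl s"
    proof (cases "x \<in> null_sets M")
      case False
      then obtain r B where "x = W r -` B \<inter> space M" "0 \<le> r" "r \<le> s" "B \<in> sets borel"
        using \<open>x \<in> gens s\<close> unfolding gens_def by auto
      moreover have "W r -` B \<inter> space M = cyl [(r,B)]" unfolding cyl_def by auto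
      moreover have "valid s [(r,B)]" using calculation unfolding valid_def by auto
      ultimately show ?thesis unfolding Pcyl_def by blast
    qed (simp add: Pcyl_def)
  qed
  then show ?thesis unfolding sets_F by (rule sigma_sets_mono')
qed

lemma indep_F_incr:
  assumes s: "0 \<le> s" "s < u" and A: "A \<in> sets (F s)" and C: "C \<in> sets borel"
  shows "prob (A \<inter> ((\<lambda>\<omega>. W u \<omega> - W s \<omega>) -` C \<inter> space M)) =
         prob A * prob ((\<lambda>\<omega>. W u \<omega> - W s \<omega>) -` C \<inter> space M)"
proof -
  have "indep_set (sigma_sets (space M) (Pcyl s)) (sigma_sets (space M) (Efam s u))"
    by (rule indep_set_sigma_sets[OF indep_Pcyl[OF s] Pcyl_Int_stable Efam_Int_stable])
  moreover have "A \<in> sigma_sets (space M) (Pcyl s)" using A sets_F_Pcyl by auto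
  moreover have "(\<lambda>\<omega>. W u \<omega> - W s \<omega>) -` C \<inter> space M \<in> sigma_sets (space M) (Efam s u)"
    using C unfolding Efam_def by (intro sigma_sets.Basic) auto
  ultimately show ?thesis by (simp add: indep_sets2_eq)
qed

lemma indep_var_F:
  assumes s: "0 \<le> s" "s < u" and V: "V \<in> borel_measurable (F s)"
  shows "indep_var borel V borel (\<lambda>\<omega>. W u \<omega> - W s \<omega>)"
proof -
  have VM: "V \<in> borel_measurable M" using F_meas_M[OF V] .
  have "indep_set {V -` A \<inter> space M |A. A \<in> sets borel} {(\<lambda>\<omega>. W u \<omega> - W s \<omega>) -` A \<inter> space M |A. A \<in> sets borel}"
  proof (subst indep_sets2_eq, intro conjI ballI)
    show "{V -` A \<inter> space M |A. A \<in> sets borel} \<subseteq> events" using VM by auto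
    show "{(\<lambda>\<omega>. W u \<omega> - W s \<omega>) -` A \<inter> space M |A. A \<in> sets borel} \<subseteq> events" using s by auto
    fix a b assume "a \<in> {V -` A \<inter> space M |A. A \<in> sets borel}"
      and "b \<in> {(\<lambda>\<omega>. W u \<omega> - W s \<omega>) -` A \<inter> space M |A. A \<in> sets borel}"
    then obtain A C where A: "A \<in> sets borel" "a = V -` A \<inter> space M" and C: "C \<in> sets borel"
      "b = (\<lambda>\<omega>. W u \<omega> - W s \<omega>) -` C \<inter> space M" by auto
    have "a \<in> sets (F s)" using measurable_sets[OF V A(1)] A(2) by simp
    then show "prob (a \<inter> b) = prob a * prob b" using indep_F_incr[OF s _ C(1)] C(2) by simp
  qed
  moreover have "(\<lambda>i. {case_bool V (\<lambda>\<omega>. W u \<omega> - W s \<omega>) i -` A \<inter> space M |A. A \<in> sets (case_bool borel borel i)})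
     = case_bool {V -` A \<inter> space M |A. A \<in> sets borel} {(\<lambda>\<omega>. W u \<omega> - W s \<omega>) -` A \<inter> space M |A. A \<in> sets borel}"
    by (rule ext) (simp split: bool.split)
  moreover have "\<forall>i\<in>UNIV. random_variable (case_bool borel borel i) (case_bool V (\<lambda>\<omega>. W u \<omega> - W s \<omega>) i)"
    using VM s by (simp split: bool.split)
  ultimately show ?thesis
    unfolding indep_var_def indep_vars_def2 indep_set_def by simp
qed

end

lemma normal_density_le: "0 < \<sigma> \<Longrightarrow> normal_density \<mu> \<sigma> x \<le> 1 / \<sigma>"
proof -
  assume s: "0 < \<sigma>"
  have e: "exp (- (x - \<mu>)\<^sup>2 / (2 * \<sigma>\<^sup>2)) \<le> 1"
    by (subst exp_le_one_iff) (simp add: divide_nonpos_pos)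
  have le: "\<sigma> \<le> sqrt (2 * pi * \<sigma>\<^sup>2)"
  proof -
    have "\<sigma> = sqrt (\<sigma>\<^sup>2)" using s by simp
    also have "\<dots> \<le> sqrt (2 * pi * \<sigma>\<^sup>2)"
      using pi_gt3 by (intro real_sqrt_le_mono) (simp add: mult_le_cancel_right1)
    finally show ?thesis .
  qed
  have a: "1 / sqrt (2 * pi * \<sigma>\<^sup>2) \<le> 1 / \<sigma>"
    by (rule divide_left_mono[OF le]) (use s in auto)
  have "normal_density \<mu> \<sigma> x \<le> 1 / sqrt (2 * pi * \<sigma>\<^sup>2) * 1"
    unfolding normal_density_def by (rule mult_left_mono[OF e]) simp
  then show ?thesis using a by simp
qed
context bm begin

lemma dW_facts:
  assumes s: "0 \<le> s" "s < u"
  shows "integrable M (\<lambda>\<omega>. W u \<omega> - W s \<omega>)" "expectation (\<lambda>\<omega>. W u \<omega> - W s \<omega>) = 0"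
    "integrable M (\<lambda>\<omega>. (W u \<omega> - W s \<omega>)\<^sup>2)" "expectation (\<lambda>\<omega>. (W u \<omega> - W s \<omega>)\<^sup>2) = u - s"
proof -
  note D = W_distr[OF s]
  have sp: "0 < sqrt (u - s)" using s by simp
  show i1: "integrable M (\<lambda>\<omega>. W u \<omega> - W s \<omega>)"
    using distributed_integrable[OF D, of "\<lambda>x. x"] integrable_normal_moment_nz_1[OF sp] by simp
  show e1: "expectation (\<lambda>\<omega>. W u \<omega> - W s \<omega>) = 0"
    using normal_distributed_expectation[OF sp D] by simp
  show "integrable M (\<lambda>\<omega>. (W u \<omega> - W s \<omega>)\<^sup>2)"
  proof -
    have "integrable lborel (\<lambda>x. normal_density 0 (sqrt (u - s)) x * (x - 0) ^ 2)"
      by (rule integrable_normal_moment[OF sp])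
    then show ?thesis using distributed_integrable[OF D, of "\<lambda>x. x\<^sup>2"] by simp
  qed
  have "variance (\<lambda>\<omega>. W u \<omega> - W s \<omega>) = (sqrt (u - s))\<^sup>2"
    using normal_distributed_variance[OF sp D] .
  then show "expectation (\<lambda>\<omega>. (W u \<omega> - W s \<omega>)\<^sup>2) = u - s" using e1 s by simp
qed

lemma dW_interval:
  assumes s: "0 \<le> s" "s < u" and ab: "a \<le> b"
  shows "emeasure M ((\<lambda>\<omega>. W u \<omega> - W s \<omega>) -` {a..b} \<inter> space M) \<le> ennreal ((b - a) / sqrt (u - s))"
proof -
  note D = W_distr[OF s]
  have sp: "0 < sqrt (u - s)" using s by simp
  have "emeasure M ((\<lambda>\<omega>. W u \<omega> - W s \<omega>) -` {a..b} \<inter> space M)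
      = (\<integral>\<^sup>+x. ennreal (normal_density 0 (sqrt (u - s)) x) * indicator {a..b} x \<partial>lborel)"
    by (rule distributed_emeasure[OF D]) simp
  also have "\<dots> \<le> (\<integral>\<^sup>+x. ennreal (1 / sqrt (u - s)) * indicator {a..b} x \<partial>lborel)"
    by (intro nn_integral_mono mult_right_mono ennreal_leI normal_density_le[OF sp]) auto
  also have "\<dots> = ennreal (1 / sqrt (u - s)) * emeasure lborel {a..b}"
    by (rule nn_integral_cmult_indicator) simp
  also have "\<dots> = ennreal ((b - a) / sqrt (u - s))"
    using ab sp by (simp add: ennreal_mult[symmetric])
  finally show ?thesis .
qed

lemma dW_near:
  assumes s: "0 \<le> s" "s < u" and V: "V \<in> borel_measurable (F s)" and r: "0 \<le> r"
  shows "prob {\<omega>\<in>space M. \<bar>(W u \<omega> - W s \<omega>) - V \<omega>\<bar> \<le> r} \<le> 2 * r / sqrt (u - s)"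
proof -
  define D where "D \<omega> = W u \<omega> - W s \<omega>" for \<omega>
  have DM: "D \<in> borel_measurable M" unfolding D_def using s by simp
  have VM: "V \<in> borel_measurable M" using F_meas_M[OF V] .
  have ind: "indep_var borel V borel D" unfolding D_def by (rule indep_var_F[OF s V])
  then have eq: "distr M borel V \<Otimes>\<^sub>M distr M borel D = distr M (borel \<Otimes>\<^sub>M borel) (\<lambda>x. (V x, D x))"
    using indep_var_distribution_eq by blast
  define S where "S = {p::real\<times>real. \<bar>snd p - fst p\<bar> \<le> r}"
  have S: "S \<in> sets (borel \<Otimes>\<^sub>M borel)"
  proof -
    have "closed S" unfolding S_def by (intro closed_Collect_le continuous_intros)
    then have "S \<in> sets borel" by simp
    then show ?thesis unfolding borel_prod .
  qed
  interpret PD: prob_space "distr M borel D" by (rule prob_space_distr) (rule DM)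
  interpret PV: prob_space "distr M borel V" by (rule prob_space_distr) (rule VM)
  have "emeasure M {\<omega>\<in>space M. \<bar>D \<omega> - V \<omega>\<bar> \<le> r} = emeasure M ((\<lambda>x. (V x, D x)) -` S \<inter> space M)"
    unfolding S_def by (intro arg_cong[where f="emeasure M"]) auto
  also have "\<dots> = emeasure (distr M (borel \<Otimes>\<^sub>M borel) (\<lambda>x. (V x, D x))) S"
    by (rule emeasure_distr[symmetric]) (use DM VM S in auto)
  also have "\<dots> = emeasure (distr M borel V \<Otimes>\<^sub>M distr M borel D) S" using eq by simp
  also have "\<dots> = (\<integral>\<^sup>+ v. emeasure (distr M borel D) (Pair v -` S) \<partial>distr M borel V)"
    by (rule PD.emeasure_pair_measure_alt) (use S in simp)
  also have "\<dots> \<le> (\<integral>\<^sup>+ v. ennreal (2 * r / sqrt (u - s)) \<partial>distr M borel V)"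
  proof (rule nn_integral_mono)
    fix v
    have "Pair v -` S = {v - r .. v + r}" unfolding S_def by auto
    then have "emeasure (distr M borel D) (Pair v -` S) = emeasure M (D -` {v - r .. v + r} \<inter> space M)"
      by (simp add: emeasure_distr[OF DM])
    also have "\<dots> \<le> ennreal (((v + r) - (v - r)) / sqrt (u - s))"
      unfolding D_def using r by (intro dW_interval[OF s]) simp
    finally show "emeasure (distr M borel D) (Pair v -` S) \<le> ennreal (2 * r / sqrt (u - s))" by simp
  qed
  also have "\<dots> = ennreal (2 * r / sqrt (u - s))"
    using PV.emeasure_space_1 by simp
  finally have "emeasure M {\<omega>\<in>space M. \<bar>D \<omega> - V \<omega>\<bar> \<le> r} \<le> ennreal (2 * r / sqrt (u - s))" .
  then show ?thesis unfolding D_def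
    using r s by (simp add: emeasure_eq_measure ennreal_le_iff)
qed

end

context bm begin

definition mtS :: "(nat \<Rightarrow> real) \<Rightarrow> (nat \<Rightarrow> 'w \<Rightarrow> real) \<Rightarrow> nat \<Rightarrow> 'w \<Rightarrow> real" where
  "mtS a g n \<omega> = (\<Sum>i<n. g i \<omega> * (W (a (Suc i)) \<omega> - W (a i) \<omega>))"

lemma mtS_meas:
  assumes a: "mono a" "0 \<le> a 0" and g: "\<forall>i<n. g i \<in> borel_measurable (F (a i))"
  shows "mtS a g n \<in> borel_measurable (F (a n))"
  unfolding mtS_def
proof (intro borel_measurable_sum borel_measurable_times borel_measurable_diff)
  fix i assume "i \<in> {..<n}"
  then have i: "i < n" "Suc i \<le> n" by auto
  have m: "a 0 \<le> a i" "a i \<le> a n" "a 0 \<le> a (Suc i)" "a (Suc i) \<le> a n"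
    using monoD[OF a(1), of 0 i] monoD[OF a(1), of i n] monoD[OF a(1), of 0 "Suc i"] monoD[OF a(1), of "Suc i" n] i
    by auto
  have ai: "0 \<le> a i" "a i \<le> a n" "0 \<le> a (Suc i)" "a (Suc i) \<le> a n"
    using m a(2) by linarith+
  have "g i \<in> borel_measurable (F (a i))" using g i(1) by blast
  then show "g i \<in> borel_measurable (F (a n))" using F_mono_meas[OF ai(2)] by blast
  show "W (a (Suc i)) \<in> borel_measurable (F (a n))" using W_adapted ai by auto
  show "W (a i) \<in> borel_measurable (F (a n))" using W_adapted ai by auto
qed

lemma abs_le_sq: "\<bar>x::real\<bar> \<le> 1 + x\<^sup>2"
proof (cases "\<bar>x\<bar> \<le> 1")
  case True
  moreover have "0 \<le> x\<^sup>2" by simp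
  ultimately show ?thesis by linarith
next
  case False
  then have "\<bar>x\<bar> * 1 \<le> \<bar>x\<bar> * \<bar>x\<bar>" by (intro mult_left_mono) auto
  also have "\<bar>x\<bar> * \<bar>x\<bar> = x\<^sup>2" by (simp add: power2_eq_square)
  finally show ?thesis by simp
qed

lemma mtS_L2:
  assumes a: "mono a" "0 \<le> a 0" "\<forall>i<n. a i < a (Suc i)"
    and g: "\<forall>i<n. g i \<in> borel_measurable (F (a i))" and gC: "\<forall>i<n. \<forall>\<omega>\<in>space M. \<bar>g i \<omega>\<bar> \<le> C"
  shows "integrable M (\<lambda>\<omega>. (mtS a g n \<omega>)\<^sup>2) \<and>
         expectation (\<lambda>\<omega>. (mtS a g n \<omega>)\<^sup>2) = (\<Sum>i<n. expectation (\<lambda>\<omega>. (g i \<omega>)\<^sup>2) * (a (Suc i) - a i))"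
  using a(3) g gC
proof (induction n)
  case 0 then show ?case by (simp add: mtS_def)
next
  case (Suc n)
  let ?S = "mtS a g n"
  define D where "D \<omega> = W (a (Suc n)) \<omega> - W (a n) \<omega>" for \<omega>
  have an: "0 \<le> a n" using monoD[OF a(1), of 0 n] a(2) by simp
  have lt: "a n < a (Suc n)" using Suc.prems by auto
  have IH: "integrable M (\<lambda>\<omega>. (?S \<omega>)\<^sup>2)"
    "expectation (\<lambda>\<omega>. (?S \<omega>)\<^sup>2) = (\<Sum>i<n. expectation (\<lambda>\<omega>. (g i \<omega>)\<^sup>2) * (a (Suc i) - a i))"
    using Suc by auto
  have SF: "?S \<in> borel_measurable (F (a n))" using mtS_meas[OF a(1,2)] Suc.prems by auto
  have gF: "g n \<in> borel_measurable (F (a n))" using Suc.prems by auto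
  have SM: "?S \<in> borel_measurable M" using F_meas_M[OF SF] .
  have gM: "g n \<in> borel_measurable M" using F_meas_M[OF gF] .
  have gb: "\<forall>\<omega>\<in>space M. \<bar>g n \<omega>\<bar> \<le> C" using Suc.prems by auto
  note dW = dW_facts[OF an lt]
  have i1: "indep_var borel (\<lambda>\<omega>. ?S \<omega> * g n \<omega>) borel D"
    unfolding D_def by (rule indep_var_F[OF an lt]) (use SF gF in simp)
  have i2': "indep_var borel (\<lambda>\<omega>. (g n \<omega>)\<^sup>2) borel D"
    unfolding D_def by (rule indep_var_F[OF an lt]) (use gF in simp)
  have i2: "indep_var borel (\<lambda>\<omega>. (g n \<omega>)\<^sup>2) borel (\<lambda>\<omega>. (D \<omega>)\<^sup>2)"
    using indep_var_compose[OF i2', of "\<lambda>x. x" borel "\<lambda>x. x\<^sup>2" borel] by (simp add: comp_def)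
  have Sg_int: "integrable M (\<lambda>\<omega>. ?S \<omega> * g n \<omega>)"
  proof (rule Bochner_Integration.integrable_bound[of _ "\<lambda>\<omega>. \<bar>C\<bar> * (1 + (?S \<omega>)\<^sup>2)"])
    show "integrable M (\<lambda>\<omega>. \<bar>C\<bar> * (1 + (?S \<omega>)\<^sup>2))" using IH(1) by simp
    show "(\<lambda>\<omega>. ?S \<omega> * g n \<omega>) \<in> borel_measurable M" using SM gM by simp
    show "AE \<omega> in M. norm (?S \<omega> * g n \<omega>) \<le> norm (\<bar>C\<bar> * (1 + (?S \<omega>)\<^sup>2))"
    proof (rule AE_I2)
      fix \<omega> assume "\<omega> \<in> space M"
      then have "\<bar>g n \<omega>\<bar> \<le> \<bar>C\<bar>" using gb by force
      moreover have "\<bar>?S \<omega>\<bar> \<le> 1 + (?S \<omega>)\<^sup>2" by (rule abs_le_sq)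
      ultimately have "\<bar>?S \<omega>\<bar> * \<bar>g n \<omega>\<bar> \<le> (1 + (?S \<omega>)\<^sup>2) * \<bar>C\<bar>"
        by (intro mult_mono) auto
      then show "norm (?S \<omega> * g n \<omega>) \<le> norm (\<bar>C\<bar> * (1 + (?S \<omega>)\<^sup>2))"
        by (simp add: abs_mult mult.commute)
    qed
  qed
  have g2_int: "integrable M (\<lambda>\<omega>. (g n \<omega>)\<^sup>2)"
  proof (rule integrable_const_bound[where B="C\<^sup>2"])
    show "AE x in M. norm ((g n x)\<^sup>2) \<le> C\<^sup>2"
    proof (rule AE_I2)
      fix x assume "x \<in> space M"
      then have "\<bar>g n x\<bar> \<le> C" using gb by blast
      then show "norm ((g n x)\<^sup>2) \<le> C\<^sup>2"
        using power_mono[of "\<bar>g n x\<bar>" C 2] by simp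
    qed
  qed (use gM in simp)
  have D_int: "integrable M D" "integrable M (\<lambda>\<omega>. (D \<omega>)\<^sup>2)" using dW unfolding D_def by auto
  have ED: "expectation D = 0" "expectation (\<lambda>\<omega>. (D \<omega>)\<^sup>2) = a (Suc n) - a n"
    using dW unfolding D_def by auto
  have t1: "integrable M (\<lambda>\<omega>. (?S \<omega> * g n \<omega>) * D \<omega>)"
    by (rule indep_var_integrable[OF i1 Sg_int D_int(1)])
  have e1: "expectation (\<lambda>\<omega>. (?S \<omega> * g n \<omega>) * D \<omega>) = 0"
    using indep_var_lebesgue_integral[OF i1 Sg_int D_int(1)] ED by simp
  have t2: "integrable M (\<lambda>\<omega>. (g n \<omega>)\<^sup>2 * (D \<omega>)\<^sup>2)"
    by (rule indep_var_integrable[OF i2 g2_int D_int(2)])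
  have e2: "expectation (\<lambda>\<omega>. (g n \<omega>)\<^sup>2 * (D \<omega>)\<^sup>2) = expectation (\<lambda>\<omega>. (g n \<omega>)\<^sup>2) * (a (Suc n) - a n)"
    using indep_var_lebesgue_integral[OF i2 g2_int D_int(2)] ED by simp
  have eq: "(\<lambda>\<omega>. (mtS a g (Suc n) \<omega>)\<^sup>2) = (\<lambda>\<omega>. (?S \<omega>)\<^sup>2 + 2 * ((?S \<omega> * g n \<omega>) * D \<omega>) + (g n \<omega>)\<^sup>2 * (D \<omega>)\<^sup>2)"
    by (rule ext) (simp add: mtS_def D_def power2_eq_square algebra_simps)
  have i12: "integrable M (\<lambda>\<omega>. (?S \<omega>)\<^sup>2 + 2 * ((?S \<omega> * g n \<omega>) * D \<omega>))"
    using IH(1) t1 by (intro Bochner_Integration.integrable_add integrable_mult_right)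
  have int: "integrable M (\<lambda>\<omega>. (?S \<omega>)\<^sup>2 + 2 * ((?S \<omega> * g n \<omega>) * D \<omega>) + (g n \<omega>)\<^sup>2 * (D \<omega>)\<^sup>2)"
    using i12 t2 by (rule Bochner_Integration.integrable_add)
  have x1: "expectation (\<lambda>\<omega>. (?S \<omega>)\<^sup>2 + 2 * ((?S \<omega> * g n \<omega>) * D \<omega>) + (g n \<omega>)\<^sup>2 * (D \<omega>)\<^sup>2)
      = expectation (\<lambda>\<omega>. (?S \<omega>)\<^sup>2 + 2 * ((?S \<omega> * g n \<omega>) * D \<omega>)) + expectation (\<lambda>\<omega>. (g n \<omega>)\<^sup>2 * (D \<omega>)\<^sup>2)"
    by (rule Bochner_Integration.integral_add[OF i12 t2])
  have x2: "expectation (\<lambda>\<omega>. (?S \<omega>)\<^sup>2 + 2 * ((?S \<omega> * g n \<omega>) * D \<omega>))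
      = expectation (\<lambda>\<omega>. (?S \<omega>)\<^sup>2) + expectation (\<lambda>\<omega>. 2 * ((?S \<omega> * g n \<omega>) * D \<omega>))"
    by (rule Bochner_Integration.integral_add[OF IH(1)]) (use t1 in simp)
  have x3: "expectation (\<lambda>\<omega>. 2 * ((?S \<omega> * g n \<omega>) * D \<omega>)) = 0"
    using e1 by (simp only: integral_mult_right_zero)
  have fin: "expectation (\<lambda>\<omega>. (mtS a g (Suc n) \<omega>)\<^sup>2) =
     (\<Sum>i<n. expectation (\<lambda>\<omega>. (g i \<omega>)\<^sup>2) * (a (Suc i) - a i)) + expectation (\<lambda>\<omega>. (g n \<omega>)\<^sup>2) * (a (Suc n) - a n)"
    unfolding eq x1 x2 x3 IH(2) e2 by (simp only: add_0_right)
  show ?case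
  proof
    show "integrable M (\<lambda>\<omega>. (mtS a g (Suc n) \<omega>)\<^sup>2)" unfolding eq by (rule int)
    show "expectation (\<lambda>\<omega>. (mtS a g (Suc n) \<omega>)\<^sup>2) = (\<Sum>i<Suc n. expectation (\<lambda>\<omega>. (g i \<omega>)\<^sup>2) * (a (Suc i) - a i))"
      unfolding sum.lessThan_Suc by (rule fin)
  qed
qed

end

lemma floor_seq: "(\<lambda>n. real_of_int \<lfloor>real (Suc n) * v\<rfloor> / real (Suc n)) \<longlonglongrightarrow> (v::real)"
proof -
  have lo: "v - 1 / real (Suc n) \<le> real_of_int \<lfloor>real (Suc n) * v\<rfloor> / real (Suc n)" for n
  proof -
    have "real (Suc n) * v - 1 \<le> real_of_int \<lfloor>real (Suc n) * v\<rfloor>" by linarith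
    then have "(real (Suc n) * v - 1) / real (Suc n) \<le> real_of_int \<lfloor>real (Suc n) * v\<rfloor> / real (Suc n)"
      by (rule divide_right_mono) simp
    moreover have "(real (Suc n) * v - 1) / real (Suc n) = v - 1 / real (Suc n)"
      by (simp add: field_simps)
    ultimately show ?thesis by simp
  qed
  have hi: "real_of_int \<lfloor>real (Suc n) * v\<rfloor> / real (Suc n) \<le> v" for n
  proof -
    have "real_of_int \<lfloor>real (Suc n) * v\<rfloor> \<le> real (Suc n) * v" by linarith
    then have "real_of_int \<lfloor>real (Suc n) * v\<rfloor> / real (Suc n) \<le> real (Suc n) * v / real (Suc n)"
      by (rule divide_right_mono) simp
    then show ?thesis by simp
  qed
  have "(\<lambda>n. v - 1 / real (Suc n)) \<longlonglongrightarrow> v - 0"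
    by (intro tendsto_diff tendsto_const LIMSEQ_inverse_real_of_nat[unfolded inverse_eq_divide])
  then have l: "(\<lambda>n. v - 1 / real (Suc n)) \<longlonglongrightarrow> v" by simp
  show ?thesis
    by (rule tendsto_sandwich[OF always_eventually always_eventually l tendsto_const]) (use lo hi in blast)+
qed

lemma Lambda_tendsto: "(\<lambda>n. Lambda n t) \<longlonglongrightarrow> t"
proof -
  have "(\<lambda>n. Lambda (Suc n) t) \<longlonglongrightarrow> t"
    unfolding Lambda_def using floor_seq[of t] by simp
  then show ?thesis by (rule LIMSEQ_imp_Suc)
qed

lemma Lambda_nonneg: "0 \<le> t \<Longrightarrow> 0 \<le> Lambda n t"
  unfolding Lambda_def by simp

lemma joint_meas:
  fixes X :: "real \<Rightarrow> 'w \<Rightarrow> real"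
  assumes Xm: "\<And>u. 0 \<le> u \<Longrightarrow> X u \<in> borel_measurable M"
    and Xc: "\<And>\<omega>. \<omega> \<in> space M \<Longrightarrow> continuous_on {0..} (\<lambda>u. X u \<omega>)"
  shows "(\<lambda>p. X (max 0 (snd p)) (fst p)) \<in> borel_measurable (M \<Otimes>\<^sub>M lborel)"
proof (rule borel_measurable_LIMSEQ_real)
  define A where "A n p = X (max 0 (real_of_int \<lfloor>real (Suc n) * max 0 (snd p)\<rfloor>) / real (Suc n)) (fst p)"
    for n and p :: "'w \<times> real"
  show "A n \<in> borel_measurable (M \<Otimes>\<^sub>M lborel)" for n
  proof -
    have f: "(\<lambda>p. X (max 0 (real_of_int i) / real (Suc n)) (fst p)) \<in> borel_measurable (M \<Otimes>\<^sub>M lborel)" for i :: int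
      using Xm by (intro measurable_compose[OF measurable_fst]) simp
    have g: "(\<lambda>p. \<lfloor>real (Suc n) * max 0 (snd p)\<rfloor>) \<in> (M \<Otimes>\<^sub>M lborel) \<rightarrow>\<^sub>M count_space UNIV"
      by (rule measurable_compose[OF _ measurable_real_floor]) measurable
    have "(\<lambda>p. (\<lambda>i::int. \<lambda>p. X (max 0 (real_of_int i) / real (Suc n)) (fst p)) (\<lfloor>real (Suc n) * max 0 (snd p)\<rfloor>) p)
        \<in> borel_measurable (M \<Otimes>\<^sub>M lborel)"
      by (rule measurable_compose_countable[OF f g])
    then show ?thesis unfolding A_def by simp
  qed
  fix p :: "'w \<times> real" assume p: "p \<in> space (M \<Otimes>\<^sub>M lborel)"
  then have "fst p \<in> space M" by (auto simp: space_pair_measure)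
  note c = Xc[OF this]
  let ?v = "max 0 (snd p)"
  have "(\<lambda>n. real_of_int \<lfloor>real (Suc n) * ?v\<rfloor> / real (Suc n)) \<longlonglongrightarrow> ?v" by (rule floor_seq)
  then have "(\<lambda>n. max 0 (real_of_int \<lfloor>real (Suc n) * ?v\<rfloor>) / real (Suc n)) \<longlonglongrightarrow> ?v"
    by (simp add: max_def)
  then show "(\<lambda>n. A n p) \<longlonglongrightarrow> X ?v (fst p)"
    unfolding A_def
    by (intro continuous_on_tendsto_compose[OF c]) auto
qed


lemma drift_repr:
  fixes r :: real and b :: "real \<Rightarrow> real"
  assumes r: "0 \<le> r"
  shows "(LBINT u=0..r. b (X u \<omega>)) = (\<integral>u. indicator {0<..<r} u * b (X (max 0 u) \<omega>) \<partial>lborel)"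
proof -
  have "(LBINT u=0..r. b (X u \<omega>)) = (\<integral>u. indicator {x. 0 < x \<and> x < r} u *\<^sub>R b (X u \<omega>) \<partial>lborel)"
    unfolding interval_lebesgue_integral_def set_lebesgue_integral_def einterval_def using r by simp
  also have "\<dots> = (\<integral>u. indicator {0<..<r} u * b (X (max 0 u) \<omega>) \<partial>lborel)"
    by (intro Bochner_Integration.integral_cong refl) (auto simp: indicator_def max_def)
  finally show ?thesis .
qed

lemma drift_meas:
  fixes X :: "real \<Rightarrow> 'w \<Rightarrow> real" and r :: real and b :: "real \<Rightarrow> real"
  assumes Xm: "\<And>u. 0 \<le> u \<Longrightarrow> X u \<in> borel_measurable M"
    and Xc: "\<And>\<omega>. \<omega> \<in> space M \<Longrightarrow> continuous_on {0..} (\<lambda>u. X u \<omega>)"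
    and b: "b \<in> borel_measurable borel" and r: "0 \<le> r"
  shows "(\<lambda>\<omega>. LBINT u=0..r. b (X u \<omega>)) \<in> borel_measurable M"
proof -
  have j: "(\<lambda>p. X (max 0 (snd p)) (fst p)) \<in> borel_measurable (M \<Otimes>\<^sub>M lborel)"
    by (rule joint_meas[OF Xm Xc])
  have "(\<lambda>(\<omega>, u). indicator {0<..<r} u * b (X (max 0 u) \<omega>)) \<in> borel_measurable (M \<Otimes>\<^sub>M lborel)"
  proof -
    have m1: "(\<lambda>p. b (X (max 0 (snd p)) (fst p))) \<in> borel_measurable (M \<Otimes>\<^sub>M lborel)"
      by (rule measurable_compose[OF j b])
    have m2: "(\<lambda>p. indicator {0<..<r} (snd p) :: real) \<in> borel_measurable (M \<Otimes>\<^sub>M lborel)"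
      by measurable
    have "(\<lambda>p. indicator {0<..<r} (snd p) * b (X (max 0 (snd p)) (fst p))) \<in> borel_measurable (M \<Otimes>\<^sub>M lborel)"
      using borel_measurable_times[OF m2 m1] by simp
    then show ?thesis by (simp add: case_prod_beta')
  qed
  then have fin: "(\<lambda>\<omega>. \<integral>u. indicator {0<..<r} u * b (X (max 0 u) \<omega>) \<partial>lborel) \<in> borel_measurable M"
    by (rule lborel.borel_measurable_lebesgue_integral)
  show ?thesis unfolding drift_repr[OF r] by (rule fin)
qed

lemma drift_bound:
  fixes X :: "real \<Rightarrow> 'w \<Rightarrow> real" and s t B :: real and b :: "real \<Rightarrow> real"
  assumes c: "continuous_on {0..} (\<lambda>u. X u \<omega>)"
    and b: "b \<in> borel_measurable borel" and bB: "\<And>x. \<bar>b x\<bar> \<le> B"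
    and st: "0 \<le> s" "s \<le> t"
  shows "\<bar>(LBINT u=0..t. b (X u \<omega>)) - (LBINT u=0..s. b (X u \<omega>))\<bar> \<le> B * (t - s)"
proof -
  define h where "h u = b (X (max 0 u) \<omega>)" for u
  have B0: "0 \<le> B" using bB[of 0] by linarith
  have "continuous_on UNIV (\<lambda>u. X (max 0 u) \<omega>)"
    by (rule continuous_on_compose2[OF c]) (auto intro!: continuous_intros)
  then have hm: "h \<in> borel_measurable lborel"
    unfolding h_def by (intro measurable_compose[OF _ b]) (simp add: borel_measurable_continuous_onI)
  have hint: "integrable lborel (\<lambda>u. indicator {0<..<r} u * h u)" if "0 \<le> r" for r
  proof (rule Bochner_Integration.integrable_bound[of _ "\<lambda>u. B * indicator {0..r} u"])
    show "integrable lborel (\<lambda>u. B * indicator {0..r} u :: real)"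
      by (intro integrable_mult_right integrable_real_indicator) (auto simp: emeasure_lborel_Icc_eq)
    show "(\<lambda>u. indicator {0<..<r} u * h u) \<in> borel_measurable lborel" using hm by simp
    show "AE u in lborel. norm (indicator {0<..<r} u * h u) \<le> norm (B * indicator {0..r} u :: real)"
      using bB B0 unfolding h_def by (intro AE_I2) (auto simp: indicator_def)
  qed
  have "(LBINT u=0..t. b (X u \<omega>)) - (LBINT u=0..s. b (X u \<omega>)) =
        (\<integral>u. indicator {0<..<t} u * h u - indicator {0<..<s} u * h u \<partial>lborel)"
    unfolding drift_repr[OF order.trans[OF st]] drift_repr[OF st(1)] h_def[symmetric]
    by (rule Bochner_Integration.integral_diff[symmetric]) (use hint st in auto)
  also have "\<bar>\<dots>\<bar> \<le> (\<integral>u. B * indicator {s..t} u \<partial>lborel)"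
  proof -
    have i1: "integrable lborel (\<lambda>u. indicator {0<..<t} u * h u - indicator {0<..<s} u * h u)"
      using hint st by (intro Bochner_Integration.integrable_diff) auto
    have i2: "integrable lborel (\<lambda>u. B * indicator {s..t} u :: real)"
      by (intro integrable_mult_right integrable_real_indicator) (auto simp: emeasure_lborel_Icc_eq)
    have pw: "norm (indicator {0<..<t} u * h u - indicator {0<..<s} u * h u) \<le> B * indicator {s..t} u"
      if "u \<in> space lborel" for u :: real
    proof -
      have "\<bar>indicator {0<..<t} u - indicator {0<..<s} u\<bar> \<le> (indicator {s..t} u :: real)"
        using st by (auto simp: indicator_def)
      moreover have "\<bar>h u\<bar> \<le> B" unfolding h_def by (rule bB)
      ultimately have "\<bar>indicator {0<..<t} u - indicator {0<..<s} u\<bar> * \<bar>h u\<bar> \<le> indicator {s..t} u * B"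
        by (intro mult_mono) auto
      moreover have "indicator {0<..<t} u * h u - indicator {0<..<s} u * h u = (indicator {0<..<t} u - indicator {0<..<s} u) * h u"
        by (simp add: left_diff_distrib)
      ultimately show ?thesis
        by (simp only: real_norm_def abs_mult mult.commute)
    qed
    show ?thesis using Bochner_Integration.integral_norm_bound_integral[OF i1 i2 pw] by simp
  qed
  also have "\<dots> = B * (t - s)"
    using st by (simp add: integral_indicator)
  finally show ?thesis .
qed

lemma ereal_side:
  assumes "ereal r \<noteq> x"
  shows "eventually (\<lambda>z. (x < ereal z \<longleftrightarrow> x < ereal r) \<and> ereal z \<noteq> x \<and> (ereal z < x \<longleftrightarrow> ereal r < x)) (nhds r)"
proof (cases x)
  case (real a)
  then have "r \<noteq> a" using assms by simp
  show ?thesis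
  proof (cases "r < a")
    case True
    have "eventually (\<lambda>z. z \<in> {..<a}) (nhds r)" by (rule eventually_nhds_in_open) (use True in auto)
    then show ?thesis by eventually_elim (use True real in auto)
  next
    case False
    then have "a < r" using \<open>r \<noteq> a\<close> by simp
    have "eventually (\<lambda>z. z \<in> {a<..}) (nhds r)" by (rule eventually_nhds_in_open) (use \<open>a < r\<close> in auto)
    then show ?thesis by eventually_elim (use \<open>a < r\<close> real in auto)
  qed
qed auto

definition locconst :: "real set \<Rightarrow> real \<Rightarrow> bool" where
  "locconst B r \<longleftrightarrow> eventually (\<lambda>z. (z \<in> B) = (r \<in> B)) (nhds r)"

lemma pos_interval_locconst:
  assumes "pos_interval S"
  shows "\<exists>E. finite E \<and> (\<forall>r. r \<notin> E \<longrightarrow> locconst S r)"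
proof -
  obtain x y :: ereal and lc rc where S: "S = {r. (x < ereal r \<or> (lc \<and> x = ereal r)) \<and> (ereal r < y \<or> (rc \<and> ereal r = y))}"
    using assms unfolding pos_interval_def by blast
  define E where "E = {r. ereal r = x} \<union> {r. ereal r = y}"
  have "{r. ereal r = x} \<subseteq> {real_of_ereal x}" by auto
  moreover have "{r. ereal r = y} \<subseteq> {real_of_ereal y}" by auto
  ultimately have "finite E" unfolding E_def by (meson finite.emptyI finite_insert finite_subset finite_Un)
  moreover have "locconst S r" if "r \<notin> E" for r
  proof -
    have "ereal r \<noteq> x" "ereal r \<noteq> y" using that unfolding E_def by auto
    from ereal_side[OF this(1)] ereal_side[OF this(2)]
    have "eventually (\<lambda>z. ((x < ereal z \<longleftrightarrow> x < ereal r) \<and> ereal z \<noteq> x \<and> (ereal z < x \<longleftrightarrow> ereal r < x)) \<and>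
        ((y < ereal z \<longleftrightarrow> y < ereal r) \<and> ereal z \<noteq> y \<and> (ereal z < y \<longleftrightarrow> ereal r < y))) (nhds r)"
      by (rule eventually_conj)
    then show ?thesis unfolding locconst_def
    proof eventually_elim
      case (elim z)
      have xe: "x \<noteq> ereal z" "x \<noteq> ereal r" using elim \<open>ereal r \<noteq> x\<close> by auto
      have "(z \<in> S) = ((x < ereal z \<or> (lc \<and> x = ereal z)) \<and> (ereal z < y \<or> (rc \<and> ereal z = y)))"
        unfolding S by simp
      also have "\<dots> = ((x < ereal r \<or> (lc \<and> x = ereal r)) \<and> (ereal r < y \<or> (rc \<and> ereal r = y)))"
        using elim xe \<open>ereal r \<noteq> y\<close> by simp
      also have "\<dots> = (r \<in> S)" unfolding S by simp
      finally show ?case .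
    qed
  qed
  ultimately show ?thesis by blast
qed

lemma union_locconst:
  assumes "finite F" "\<forall>S\<in>F. pos_interval S"
  shows "\<exists>E. finite E \<and> (\<forall>r. r \<notin> E \<longrightarrow> locconst (\<Union>F) r)"
proof -
  have "\<forall>S\<in>F. \<exists>E. finite E \<and> (\<forall>r. r \<notin> E \<longrightarrow> locconst S r)"
    using assms(2) pos_interval_locconst by blast
  then obtain E where E: "\<And>S. S \<in> F \<Longrightarrow> finite (E S) \<and> (\<forall>r. r \<notin> E S \<longrightarrow> locconst S r)"
    by metis
  have "finite (\<Union>S\<in>F. E S)" using assms(1) E by auto
  moreover have "locconst (\<Union>F) r" if "r \<notin> (\<Union>S\<in>F. E S)" for r
  proof -
    have "\<forall>S\<in>F. eventually (\<lambda>z. (z \<in> S) = (r \<in> S)) (nhds r)"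
    proof
      fix S assume S: "S \<in> F"
      then have "r \<notin> E S" using that by simp
      then have "locconst S r" using E[OF S] by simp
      then show "eventually (\<lambda>z. (z \<in> S) = (r \<in> S)) (nhds r)" unfolding locconst_def .
    qed
    then have "eventually (\<lambda>z. \<forall>S\<in>F. (z \<in> S) = (r \<in> S)) (nhds r)"
      by (rule eventually_ball_finite[OF assms(1)])
    then show ?thesis unfolding locconst_def
    proof eventually_elim
      case (elim z)
      show ?case
      proof
        assume "z \<in> \<Union>F" then obtain S where "S \<in> F" "z \<in> S" by blast
        then show "r \<in> \<Union>F" using elim by blast
      next
        assume "r \<in> \<Union>F" then obtain S where "S \<in> F" "r \<in> S" by blast
        then show "z \<in> \<Union>F" using elim by blast
      qed
    qed
  qed
  ultimately show ?thesis by blast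
qed

lemma psem_borel: "(\<And>a. I a \<in> sets borel) \<Longrightarrow> psem I p \<in> sets borel"
  by (induction p) auto

lemma final_from_noatom:
  fixes M :: "'w measure" and X :: "real \<Rightarrow> 'w \<Rightarrow> real"
    and I :: "'a \<Rightarrow> real set" and p :: "'a pform" and t :: real
  assumes PS: "prob_space M"
    and Xm: "\<And>u. 0 \<le> u \<Longrightarrow> X u \<in> borel_measurable M"
    and Xc: "\<And>\<omega>. \<omega> \<in> space M \<Longrightarrow> continuous_on {0..} (\<lambda>u. X u \<omega>)"
    and atoms_borel: "\<And>a. I a \<in> sets borel"
    and intervals: "\<And>q. \<exists>B. (\<forall>\<omega>\<in>space M. \<forall>s\<ge>0. models I X \<omega> s q \<longleftrightarrow> X s \<omega> \<in> B)
                          \<and> sep_interval_union B"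
    and t_pos: "t > 0"
    and noatom: "\<And>c. measure M {\<omega>\<in>space M. X t \<omega> = c} = 0"
  shows "(AE \<omega> in M. (\<lambda>n. chi_n I X n p \<omega> t) \<longlonglongrightarrow> chi I X p \<omega> t)
         \<and> (\<lambda>n. measure M {\<omega> \<in> space M. models I X \<omega> (Lambda n t) p})
             \<longlonglongrightarrow> measure M {\<omega> \<in> space M. models I X \<omega> t p}"
proof -
  interpret prob_space M by (rule PS)
  obtain B where B: "\<forall>\<omega>\<in>space M. \<forall>s\<ge>0. models I X \<omega> s p \<longleftrightarrow> X s \<omega> \<in> B" and sB: "sep_interval_union B"
    using intervals by blast
  obtain F where F: "finite F" "\<forall>S\<in>F. pos_interval S" "B = \<Union>F"
    using sB unfolding sep_interval_union_def by blast
  obtain E where E: "finite E" "\<And>r. r \<notin> E \<Longrightarrow> locconst B r"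
    using union_locconst[OF F(1,2)] F(3) by blast
  have conv: "(\<lambda>n. chi_n I X n p \<omega> t) \<longlonglongrightarrow> chi I X p \<omega> t" if \<omega>: "\<omega> \<in> space M" "X t \<omega> \<notin> E" for \<omega>
  proof -
    have lc: "eventually (\<lambda>z. (z \<in> B) = (X t \<omega> \<in> B)) (nhds (X t \<omega>))"
      using E(2)[OF \<omega>(2)] unfolding locconst_def .
    have ev0: "\<forall>\<^sub>F n in sequentially. Lambda n t \<in> {0..}" using Lambda_nonneg t_pos by simp
    have "(\<lambda>n. X (Lambda n t) \<omega>) \<longlonglongrightarrow> X t \<omega>"
      by (rule continuous_on_tendsto_compose[OF Xc[OF \<omega>(1)] Lambda_tendsto _ ev0]) (use t_pos in simp)
    then have "eventually (\<lambda>n. (X (Lambda n t) \<omega> \<in> B) = (X t \<omega> \<in> B)) sequentially"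
      using lc by (rule filterlim_iff[THEN iffD1, rule_format, where P="\<lambda>z. (z \<in> B) = (X t \<omega> \<in> B)"])
    then have "eventually (\<lambda>n. chi_n I X n p \<omega> t = chi I X p \<omega> t) sequentially"
    proof eventually_elim
      case (elim n)
      have "models I X \<omega> (Lambda n t) p \<longleftrightarrow> X (Lambda n t) \<omega> \<in> B"
        using B \<omega>(1) Lambda_nonneg[of t n] t_pos by auto
      moreover have "models I X \<omega> t p \<longleftrightarrow> X t \<omega> \<in> B" using B \<omega>(1) t_pos by auto
      ultimately show ?case using elim unfolding chi_n_def chi_def by simp
    qed
    then show ?thesis by (rule tendsto_eventually)
  qed
  have Xt: "X t \<in> borel_measurable M" using Xm t_pos by simp
  have ae_c: "AE \<omega> in M. X t \<omega> \<noteq> c" for c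
  proof (rule AE_I[where N="{\<omega>\<in>space M. X t \<omega> = c}"])
    show "{\<omega> \<in> space M. \<not> X t \<omega> \<noteq> c} \<subseteq> {\<omega> \<in> space M. X t \<omega> = c}" by auto
    have s: "{\<omega>\<in>space M. X t \<omega> = c} \<in> sets M" using Xt by measurable
    then show "emeasure M {\<omega>\<in>space M. X t \<omega> = c} = 0" using noatom[of c] by (simp add: emeasure_eq_measure)
    show "{\<omega>\<in>space M. X t \<omega> = c} \<in> sets M" by (rule s)
  qed
  have aeE: "AE \<omega> in M. \<forall>c\<in>E. X t \<omega> \<noteq> c" by (rule AE_finite_allI[OF E(1) ae_c])
  have ae: "AE \<omega> in M. (\<lambda>n. chi_n I X n p \<omega> t) \<longlonglongrightarrow> chi I X p \<omega> t"
    using aeE by (rule AE_mp) (intro AE_I2 impI, use conv in blast)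
  have ps: "psem I p \<in> sets borel" by (rule psem_borel[OF atoms_borel])
  have setm: "{\<omega>\<in>space M. models I X \<omega> s p} \<in> sets M" if "0 \<le> s" for s
  proof -
    have "X s \<in> borel_measurable M" using Xm that by simp
    then have "X s -` psem I p \<inter> space M \<in> sets M" using ps by (rule measurable_sets)
    moreover have "{\<omega>\<in>space M. models I X \<omega> s p} = X s -` psem I p \<inter> space M"
      unfolding models_def by auto
    ultimately show ?thesis by simp
  qed
  have int_eq: "expectation (\<lambda>\<omega>. chi_n I X n p \<omega> t) = measure M {\<omega>\<in>space M. models I X \<omega> (Lambda n t) p}" for n
  proof -
    have "expectation (\<lambda>\<omega>. chi_n I X n p \<omega> t) = expectation (indicator {\<omega>\<in>space M. models I X \<omega> (Lambda n t) p})"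
      by (intro Bochner_Integration.integral_cong) (auto simp: chi_n_def indicator_def)
    also have "\<dots> = measure M {\<omega>\<in>space M. models I X \<omega> (Lambda n t) p}"
      by (simp add: integral_indicator Int_absorb2)
    finally show ?thesis .
  qed
  have int_eq2: "expectation (\<lambda>\<omega>. chi I X p \<omega> t) = measure M {\<omega>\<in>space M. models I X \<omega> t p}"
  proof -
    have "expectation (\<lambda>\<omega>. chi I X p \<omega> t) = expectation (indicator {\<omega>\<in>space M. models I X \<omega> t p})"
      by (intro Bochner_Integration.integral_cong) (auto simp: chi_def indicator_def)
    also have "\<dots> = measure M {\<omega>\<in>space M. models I X \<omega> t p}"
      by (simp add: integral_indicator Int_absorb2)
    finally show ?thesis .
  qed
  have ind_meas: "f \<in> borel_measurable M" if "A \<in> sets M" "\<And>\<omega>. \<omega> \<in> space M \<Longrightarrow> f \<omega> = indicator A \<omega>"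
    for f :: "'w \<Rightarrow> real" and A
    using measurable_cong[of M f "indicator A", OF that(2)] borel_measurable_indicator[OF that(1)] by simp
  have m1: "(\<lambda>\<omega>. chi_n I X n p \<omega> t) \<in> borel_measurable M" for n
    by (rule ind_meas[OF setm[OF Lambda_nonneg[OF less_imp_le[OF t_pos], of n]]]) (use t_pos in \<open>auto simp: chi_n_def indicator_def\<close>)
  have m2: "(\<lambda>\<omega>. chi I X p \<omega> t) \<in> borel_measurable M"
    by (rule ind_meas[OF setm[OF less_imp_le[OF t_pos]]]) (use t_pos in \<open>auto simp: chi_def indicator_def\<close>)
  have "(\<lambda>n. expectation (\<lambda>\<omega>. chi_n I X n p \<omega> t)) \<longlonglongrightarrow> expectation (\<lambda>\<omega>. chi I X p \<omega> t)"
  proof (rule integral_dominated_convergence[where w="\<lambda>_. 1"])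
    show "integrable M (\<lambda>_. 1::real)" by simp
    show "AE x in M. norm (chi_n I X n p x t) \<le> 1" for n by (intro AE_I2) (simp add: chi_n_def)
  qed (use m1 m2 ae in auto)
  then show ?thesis using ae unfolding int_eq int_eq2 by simp
qed

lemma pred_imp_const: "(P \<Longrightarrow> Measurable.pred M Q) \<Longrightarrow> Measurable.pred M (\<lambda>x. P \<longrightarrow> Q x)"
  by (cases P) auto

locale sde = bm M W for M :: "'w measure" and W +
  fixes b \<sigma> :: "real \<Rightarrow> real" and \<xi> :: real and X :: "real \<Rightarrow> 'w \<Rightarrow> real" and L Bb :: real
  assumes nondeg: "\<And>K. compact K \<Longrightarrow> K \<noteq> {} \<Longrightarrow> Inf (\<sigma> ` K) > 0"
    and lip: "L-lipschitz_on UNIV \<sigma>"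
    and b_meas: "b \<in> borel_measurable borel" and bB: "\<And>x. \<bar>b x\<bar> \<le> Bb"
    and sol: "strong_solution M W b \<sigma> \<xi> X"
begin

lemma Xc: "\<omega> \<in> space M \<Longrightarrow> continuous_on {0..} (\<lambda>t. X t \<omega>)"
  using sol unfolding strong_solution_def by auto

lemma Xad: "0 \<le> t \<Longrightarrow> X t \<in> borel_measurable (F t)"
  using sol unfolding strong_solution_def by auto

lemma Xm: "0 \<le> t \<Longrightarrow> X t \<in> borel_measurable M"
  using F_meas_M[OF Xad] by blast

definition Z where "Z r \<omega> = X r \<omega> - \<xi> - (LBINT u=0..r. b (X u \<omega>))"
definition S where "S m r \<omega> = ito_riemann_sum W (\<lambda>s \<omega>. \<sigma> (X s \<omega>)) r m \<omega>"

lemma conv: "0 \<le> t \<Longrightarrow> \<epsilon> > 0 \<Longrightarrow> (\<lambda>m. prob {\<omega>\<in>space M. \<bar>S m t \<omega> - Z t \<omega>\<bar> > \<epsilon>}) \<longlonglongrightarrow> 0"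
  using sol unfolding strong_solution_def converges_in_prob_def S_def Z_def by auto

lemma L_nonneg: "0 \<le> L" using lipschitz_on_nonneg[OF lip] .

lemma sig_cont: "continuous_on UNIV \<sigma>" using lipschitz_on_continuous_on[OF lip] .

lemma sig_meas[measurable]: "\<sigma> \<in> borel_measurable borel"
  using sig_cont by (simp add: borel_measurable_continuous_onI)

lemma sig_lip: "\<bar>\<sigma> x - \<sigma> y\<bar> \<le> L * \<bar>x - y\<bar>"
  using lipschitz_onD[OF lip, of x y] by (simp add: dist_real_def)

lemma Z_meas: "0 \<le> r \<Longrightarrow> Z r \<in> borel_measurable M"
  unfolding Z_def using drift_meas[of X M b r] Xm Xc b_meas by simp

lemma S_meas: assumes r0: "0 \<le> r" shows "S m r \<in> borel_measurable M"
proof -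
  have "(\<lambda>\<omega>. \<sigma> (X (real k / 2 ^ m) \<omega>) * (W (min (real (Suc k) / 2 ^ m) r) \<omega> - W (real k / 2 ^ m) \<omega>)) \<in> borel_measurable M" for k
  proof -
    have a: "0 \<le> real k / 2 ^ m" by simp
    have "0 \<le> min (real (Suc k) / 2 ^ m) r" using r0 by simp
    then show ?thesis using Xm[OF a] W_meas[OF a] W_meas by measurable
  qed
  then show ?thesis unfolding S_def ito_riemann_sum_def by (intro borel_measurable_sum) simp
qed

lemma sigma_lower: assumes "0 < R" shows "\<exists>sR>0. \<forall>x. \<bar>x\<bar> \<le> R \<longrightarrow> sR \<le> \<sigma> x"
proof -
  have K: "compact {-R..R}" "{-R..R} \<noteq> {}" using assms by auto
  have "compact (\<sigma> ` {-R..R})" by (rule compact_continuous_image[OF continuous_on_subset[OF sig_cont] K(1)]) simp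
  then have bdd: "bdd_below (\<sigma> ` {-R..R})" by (intro bounded_imp_bdd_below compact_imp_bounded)
  have "\<forall>x. \<bar>x\<bar> \<le> R \<longrightarrow> Inf (\<sigma> ` {-R..R}) \<le> \<sigma> x"
  proof (intro allI impI)
    fix x :: real assume "\<bar>x\<bar> \<le> R"
    then have "x \<in> {-R..R}" by (simp add: abs_le_iff)
    then have "\<sigma> x \<in> \<sigma> ` {-R..R}" by (rule imageI)
    then show "Inf (\<sigma> ` {-R..R}) \<le> \<sigma> x" using cInf_lower[OF _ bdd] by blast
  qed
  then show ?thesis using nondeg[OF K] by blast
qed

definition Qr :: "real \<Rightarrow> real \<Rightarrow> rat set" where "Qr a c = {q. a \<le> of_rat q \<and> of_rat q \<le> c}"

definition AR where "AR t R = {\<omega>\<in>space M. \<forall>q. 0 \<le> real_of_rat q \<and> real_of_rat q \<le> t \<longrightarrow> \<bar>X (of_rat q) \<omega>\<bar> \<le> R}"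

lemma AR_sets: "AR t R \<in> sets M"
proof -
  have p: "Measurable.pred M (\<lambda>\<omega>. 0 \<le> real_of_rat q \<and> real_of_rat q \<le> t \<longrightarrow> \<bar>X (of_rat q) \<omega>\<bar> \<le> R)" for q
  proof (rule pred_imp_const)
    assume "0 \<le> real_of_rat q \<and> real_of_rat q \<le> t"
    then have [measurable]: "X (of_rat q) \<in> borel_measurable M" using Xm by simp
    show "Measurable.pred M (\<lambda>\<omega>. \<bar>X (of_rat q) \<omega>\<bar> \<le> R)" by measurable
  qed
  have "Measurable.pred M (\<lambda>\<omega>. \<forall>q. 0 \<le> real_of_rat q \<and> real_of_rat q \<le> t \<longrightarrow> \<bar>X (of_rat q) \<omega>\<bar> \<le> R)"
    by (rule pred_intros_countable(1)[OF p])
  then show ?thesis unfolding AR_def pred_def by assumption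
qed

lemma AR_lim: "(\<lambda>k. prob (space M - AR t (real k))) \<longlonglongrightarrow> 0"
proof -
  have inc: "incseq (\<lambda>k. AR t (real k))"
    unfolding incseq_def AR_def by (auto intro: order_trans)
  have "(\<lambda>k. prob (AR t (real k))) \<longlonglongrightarrow> prob (\<Union>k. AR t (real k))"
    by (rule finite_Lim_measure_incseq[OF _ inc]) (use AR_sets in auto)
  moreover have "(\<Union>k. AR t (real k)) = space M"
  proof
    show "(\<Union>k. AR t (real k)) \<subseteq> space M" unfolding AR_def by auto
    show "space M \<subseteq> (\<Union>k. AR t (real k))"
    proof
      fix \<omega> assume \<omega>: "\<omega> \<in> space M"
      have "compact ((\<lambda>u. X u \<omega>) ` {0..max 0 t})"
        by (rule compact_continuous_image[OF continuous_on_subset[OF Xc[OF \<omega>]]]) auto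
      then obtain B where B: "\<forall>x\<in>(\<lambda>u. X u \<omega>) ` {0..max 0 t}. norm x \<le> B"
        using compact_imp_bounded bounded_iff by metis
      obtain k :: nat where "B \<le> real k" using real_arch_simple by blast
      have "\<bar>X (of_rat q) \<omega>\<bar> \<le> real k" if "0 \<le> real_of_rat q \<and> real_of_rat q \<le> t" for q
      proof -
        have "real_of_rat q \<in> {0..max 0 t}" using that by auto
        then have "norm (X (of_rat q) \<omega>) \<le> B" using B by blast
        then show ?thesis using \<open>B \<le> real k\<close> by simp
      qed
      then have "\<omega> \<in> AR t (real k)" unfolding AR_def using \<omega> by blast
      then show "\<omega> \<in> (\<Union>k. AR t (real k))" by blast
    qed
  qed
  ultimately have "(\<lambda>k. prob (AR t (real k))) \<longlonglongrightarrow> 1" using prob_space by simp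
  then have "(\<lambda>k. 1 - prob (AR t (real k))) \<longlonglongrightarrow> 1 - 1" by (intro tendsto_diff tendsto_const)
  moreover have "prob (space M - AR t (real k)) = 1 - prob (AR t (real k))" for k
    using prob_compl[OF AR_sets] by simp
  ultimately show ?thesis by simp
qed

end

lemma sum_split_add: "(\<Sum>i<K0 + n. f i) = (\<Sum>i<K0. f i) + (\<Sum>i<n. f (K0 + i))"
  for f :: "nat \<Rightarrow> 'a::comm_monoid_add"
  by (induction n) (simp_all add: add.assoc)

context sde begin

definition cl :: "real \<Rightarrow> real \<Rightarrow> real" where "cl R x = max (-R) (min R x)"

lemma cl_lip: "0 \<le> R \<Longrightarrow> \<bar>cl R x - cl R y\<bar> \<le> min \<bar>x - y\<bar> (2 * R)"
  unfolding cl_def by (auto simp: max_def min_def abs_if)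

lemma cl_id: "\<bar>x\<bar> \<le> R \<Longrightarrow> cl R x = x"
  unfolding cl_def by (simp add: abs_le_iff)

lemma g_bound: "0 \<le> R \<Longrightarrow> \<bar>\<sigma> (cl R x) - \<sigma> (cl R y)\<bar> \<le> L * min \<bar>x - y\<bar> (2 * R)"
  using sig_lip[of "cl R x" "cl R y"] cl_lip[of R x y] L_nonneg
  by (meson mult_left_mono order_trans)

definition Om where "Om t R s \<omega> = L * (SUP q\<in>Qr s t. min \<bar>X (of_rat q) \<omega> - X s \<omega>\<bar> (2 * R))"

lemma Om_bdd: "bdd_above ((\<lambda>q. min \<bar>X (of_rat q) \<omega> - X s \<omega>\<bar> (2 * R)) ` A)"
  by (rule bdd_aboveI[of _ "2 * R"]) auto

lemma Om_meas: assumes "0 \<le> s" shows "Om t R s \<in> borel_measurable M"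
proof -
  have "(\<lambda>\<omega>. SUP q\<in>Qr s t. min \<bar>X (of_rat q) \<omega> - X s \<omega>\<bar> (2 * R)) \<in> borel_measurable M"
  proof (rule borel_measurable_cSUP)
    show "countable (Qr s t)" by simp
    fix q assume "q \<in> Qr s t"
    then have "s \<le> real_of_rat q" unfolding Qr_def by simp
    then have "0 \<le> real_of_rat q" using assms by linarith
    then have [measurable]: "X (of_rat q) \<in> borel_measurable M" "X s \<in> borel_measurable M" using Xm assms by auto
    show "(\<lambda>\<omega>. min \<bar>X (of_rat q) \<omega> - X s \<omega>\<bar> (2 * R)) \<in> borel_measurable M" by measurable
  qed (rule Om_bdd)
  then show ?thesis unfolding Om_def by simp
qed

lemma Om_ge: "q \<in> Qr s t \<Longrightarrow> L * min \<bar>X (of_rat q) \<omega> - X s \<omega>\<bar> (2 * R) \<le> Om t R s \<omega>"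
  unfolding Om_def using L_nonneg by (intro mult_left_mono cSUP_upper Om_bdd) auto

lemma Om_bounds: assumes "0 \<le> R" "Qr s t \<noteq> {}" shows "0 \<le> Om t R s \<omega>" "Om t R s \<omega> \<le> L * (2 * R)"
proof -
  obtain q where q: "q \<in> Qr s t" using assms by auto
  have "0 \<le> L * min \<bar>X (of_rat q) \<omega> - X s \<omega>\<bar> (2 * R)" using L_nonneg assms by simp
  then show "0 \<le> Om t R s \<omega>" using Om_ge[OF q, of \<omega> R] by linarith
  have "(SUP q\<in>Qr s t. min \<bar>X (of_rat q) \<omega> - X s \<omega>\<bar> (2 * R)) \<le> 2 * R"
    by (rule cSUP_least[OF assms(2)]) simp
  then show "Om t R s \<omega> \<le> L * (2 * R)" unfolding Om_def using L_nonneg by (rule mult_left_mono)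
qed

definition sq :: "real \<Rightarrow> nat \<Rightarrow> real" where
  "sq t q = real (nat (\<lceil>2 ^ q * t\<rceil> - 1)) / 2 ^ q"

lemma sq_props:
  assumes t: "0 < t"
  shows "sq t q < t" "t - 1 / 2 ^ q \<le> sq t q" "0 \<le> sq t q" "of_rat (of_nat (nat (\<lceil>2 ^ q * t\<rceil> - 1)) / 2 ^ q) = sq t q"
proof -
  have c1: "1 \<le> \<lceil>2 ^ q * t\<rceil>" using t by (simp add: one_le_ceiling)
  then have e: "real (nat (\<lceil>2 ^ q * t\<rceil> - 1)) = real_of_int \<lceil>2 ^ q * t\<rceil> - 1" by simp
  have p: "(0::real) < 2 ^ q" by simp
  have "real_of_int \<lceil>2 ^ q * t\<rceil> - 1 < 2 ^ q * t" by linarith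
  then show "sq t q < t" unfolding sq_def e using p by (simp add: divide_less_eq mult.commute)
  have "2 ^ q * t - 1 \<le> real_of_int \<lceil>2 ^ q * t\<rceil> - 1" by linarith
  then have "(2 ^ q * t - 1) / 2 ^ q \<le> (real_of_int \<lceil>2 ^ q * t\<rceil> - 1) / 2 ^ q" by (rule divide_right_mono) simp
  moreover have "(2 ^ q * t - 1) / 2 ^ q = t - 1 / 2 ^ q" using p by (simp add: field_simps)
  ultimately show "t - 1 / 2 ^ q \<le> sq t q" unfolding sq_def e by simp
  show "0 \<le> sq t q" unfolding sq_def by simp
  show "of_rat (of_nat (nat (\<lceil>2 ^ q * t\<rceil> - 1)) / 2 ^ q) = sq t q"
    unfolding sq_def by (simp add: of_rat_divide of_rat_power)
qed

lemma sq_tendsto: assumes t: "0 < t" shows "sq t \<longlonglongrightarrow> t"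
proof -
  have "(\<lambda>q. t - 1 / 2 ^ q) \<longlonglongrightarrow> t - 0"
    by (intro tendsto_diff tendsto_const LIMSEQ_divide_realpow_zero) simp_all
  then have l: "(\<lambda>q. t - 1 / 2 ^ q) \<longlonglongrightarrow> t" by simp
  show ?thesis
    by (rule tendsto_sandwich[OF always_eventually always_eventually l tendsto_const])
       (use sq_props[OF t] in \<open>auto intro: less_imp_le\<close>)
qed

lemma sq_in_Qr: assumes t: "0 < t" shows "Qr (sq t q) t \<noteq> {}"
proof -
  have "of_nat (nat (\<lceil>2 ^ q * t\<rceil> - 1)) / 2 ^ q \<in> Qr (sq t q) t"
    unfolding Qr_def using sq_props[OF t, of q] by simp
  then show ?thesis by blast
qed

lemma Om_lim_pt:
  assumes t: "0 < t" and R: "0 \<le> R" and \<omega>: "\<omega> \<in> space M"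
  shows "(\<lambda>q. Om t R (sq t q) \<omega>) \<longlonglongrightarrow> 0"
proof (rule LIMSEQ_I)
  fix e :: real assume e: "0 < e"
  define e' where "e' = e / (2 * (L + 1))"
  have e': "0 < e'" unfolding e'_def using e L_nonneg by (intro divide_pos_pos) auto
  have "continuous (at t within {0..}) (\<lambda>u. X u \<omega>)"
    using Xc[OF \<omega>] t unfolding continuous_on_eq_continuous_within by simp
  then obtain d where d: "0 < d" "\<And>u. u \<in> {0..} \<Longrightarrow> dist u t < d \<Longrightarrow> dist (X u \<omega>) (X t \<omega>) < e'"
    using e' unfolding continuous_within_eps_delta by blast
  have "eventually (\<lambda>q. dist (sq t q) t < d) sequentially"
    using sq_tendsto[OF t] d(1) by (rule tendstoD)
  then obtain N where N: "\<And>q. q \<ge> N \<Longrightarrow> dist (sq t q) t < d" unfolding eventually_sequentially by blast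
  show "\<exists>N. \<forall>n\<ge>N. norm (Om t R (sq t n) \<omega> - 0) < e"
  proof (intro exI allI impI)
    fix n assume "N \<le> n"
    then have dn: "dist (sq t n) t < d" using N by blast
    have sn: "0 \<le> sq t n" "sq t n < t" using sq_props[OF t] by auto
    have Xs: "dist (X (sq t n) \<omega>) (X t \<omega>) < e'" using d(2)[OF _ dn] sn by simp
    have bnd: "min \<bar>X (of_rat q) \<omega> - X (sq t n) \<omega>\<bar> (2 * R) \<le> 2 * e'" if q: "q \<in> Qr (sq t n) t" for q
    proof -
      have "sq t n \<le> of_rat q" "of_rat q \<le> t" using q unfolding Qr_def by auto
      then have "dist (real_of_rat q) t < d" using dn sn by (auto simp: dist_real_def)
      have "0 \<le> real_of_rat q" using \<open>sq t n \<le> of_rat q\<close> sn by linarith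
      then have "real_of_rat q \<in> {0..}" by simp
      then have "dist (X (of_rat q) \<omega>) (X t \<omega>) < e'" using d(2) \<open>dist (real_of_rat q) t < d\<close> by blast
      then have "\<bar>X (of_rat q) \<omega> - X (sq t n) \<omega>\<bar> < 2 * e'" using Xs by (simp add: dist_real_def)
      then show ?thesis by simp
    qed
    have "(SUP q\<in>Qr (sq t n) t. min \<bar>X (of_rat q) \<omega> - X (sq t n) \<omega>\<bar> (2 * R)) \<le> 2 * e'"
      by (rule cSUP_least[OF sq_in_Qr[OF t]]) (rule bnd)
    then have "Om t R (sq t n) \<omega> \<le> L * (2 * e')" unfolding Om_def using L_nonneg by (rule mult_left_mono)
    also have "\<dots> < e" unfolding e'_def using e L_nonneg by (simp add: field_simps)
    finally show "norm (Om t R (sq t n) \<omega> - 0) < e"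
      using Om_bounds(1)[OF R sq_in_Qr[OF t]] by simp
  qed
qed

lemma Om_L2_lim:
  assumes t: "0 < t" and R: "0 \<le> R"
  shows "(\<lambda>q. expectation (\<lambda>\<omega>. (Om t R (sq t q) \<omega>)\<^sup>2)) \<longlonglongrightarrow> 0"
proof -
  have "(\<lambda>q. expectation (\<lambda>\<omega>. (Om t R (sq t q) \<omega>)\<^sup>2)) \<longlonglongrightarrow> expectation (\<lambda>\<omega>. 0::real)"
  proof (rule integral_dominated_convergence[where w="\<lambda>_. (L * (2 * R))\<^sup>2"])
    show "(\<lambda>\<omega>. (Om t R (sq t q) \<omega>)\<^sup>2) \<in> borel_measurable M" for q
      using Om_meas[OF sq_props(3)[OF t]] by simp
    show "AE \<omega> in M. (\<lambda>q. (Om t R (sq t q) \<omega>)\<^sup>2) \<longlonglongrightarrow> 0"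
      using Om_lim_pt[OF t R] by (intro AE_I2) (metis power_zero_numeral tendsto_power zero_less_numeral)
    show "AE \<omega> in M. norm ((Om t R (sq t q) \<omega>)\<^sup>2) \<le> (L * (2 * R))\<^sup>2" for q
      using Om_bounds[OF R sq_in_Qr[OF t]] by (intro AE_I2) (simp add: power_mono)
  qed simp_all
  then show ?thesis by simp
qed

end

context sde begin

lemma riemann_window:
  assumes sj: "s = real j / 2 ^ m0" and s0: "0 \<le> s" and st: "s < t" and m: "m0 \<le> m"
  defines "K0 \<equiv> j * 2 ^ (m - m0)"
  defines "n \<equiv> nat \<lceil>2 ^ m * t\<rceil> - K0"
  defines "a \<equiv> (\<lambda>i. min (real (K0 + i) / 2 ^ m) t)"
  shows "real K0 / 2 ^ m = s" "\<forall>i<n. real (K0 + i) / 2 ^ m < t" "a n = t" "a 0 = s"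
    "\<omega> \<in> space M \<Longrightarrow> S m t \<omega> - S m s \<omega> = (\<Sum>i<n. \<sigma> (X (a i) \<omega>) * (W (a (Suc i)) \<omega> - W (a i) \<omega>))"
proof -
  have p: "(2::real) ^ m = 2 ^ m0 * 2 ^ (m - m0)" using m by (simp add: power_add[symmetric])
  show K0s: "real K0 / 2 ^ m = s" unfolding K0_def sj p by simp
  then have K0s': "2 ^ m * s = real K0" by (simp add: field_simps)
  have "2 ^ m * s < 2 ^ m * (t::real)" using st by simp
  then have "real K0 < 2 ^ m * t" using K0s' by simp
  then have "real K0 < real_of_int \<lceil>2 ^ m * t\<rceil>" by linarith
  then have K0lt: "K0 < nat \<lceil>2 ^ m * t\<rceil>" by linarith
  then have Kt: "nat \<lceil>2 ^ m * t\<rceil> = K0 + n" unfolding n_def by simp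
  show lt: "\<forall>i<n. real (K0 + i) / 2 ^ m < t"
  proof (intro allI impI)
    fix i assume "i < n"
    then have "K0 + i + 1 \<le> nat \<lceil>2 ^ m * t\<rceil>" using Kt by simp
    then have "real (K0 + i) + 1 \<le> real_of_int \<lceil>2 ^ m * t\<rceil>" by linarith
    then have "real (K0 + i) < 2 ^ m * t" by linarith
    then show "real (K0 + i) / 2 ^ m < t" by (simp add: divide_less_eq mult.commute)
  qed
  have "2 ^ m * t \<le> real (K0 + n)" using Kt by linarith
  then have "t \<le> real (K0 + n) / 2 ^ m" by (simp add: le_divide_eq mult.commute)
  then show an: "a n = t" unfolding a_def by simp
  show a0: "a 0 = s" unfolding a_def using K0s st by simp
  define f where "f k = \<sigma> (X (real k / 2 ^ m) \<omega>) * (W (min (real (Suc k) / 2 ^ m) t) \<omega> - W (real k / 2 ^ m) \<omega>)" for k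
  have St: "S m t \<omega> = (\<Sum>k<K0 + n. f k)" unfolding S_def ito_riemann_sum_def f_def Kt ..
  have Ks: "nat \<lceil>2 ^ m * s\<rceil> = K0" unfolding K0s' by simp
  have Ss: "S m s \<omega> = (\<Sum>k<K0. f k)"
    unfolding S_def ito_riemann_sum_def Ks
  proof (rule sum.cong[OF refl])
    fix k assume "k \<in> {..<K0}"
    then have "real (Suc k) \<le> real K0" by simp
    then have "real (Suc k) / 2 ^ m \<le> real K0 / 2 ^ m" by (intro divide_right_mono) simp_all
    then have "real (Suc k) / 2 ^ m \<le> s" using K0s by simp
    then show "\<sigma> (X (real k / 2 ^ m) \<omega>) * (W (min (real (Suc k) / 2 ^ m) s) \<omega> - W (real k / 2 ^ m) \<omega>) = f k"
      unfolding f_def using st by (simp add: min_def)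
  qed
  have "S m t \<omega> - S m s \<omega> = (\<Sum>i<n. f (K0 + i))" unfolding St Ss sum_split_add by simp
  also have "\<dots> = (\<Sum>i<n. \<sigma> (X (a i) \<omega>) * (W (a (Suc i)) \<omega> - W (a i) \<omega>))"
  proof (rule sum.cong[OF refl])
    fix i assume "i \<in> {..<n}"
    then have "real (K0 + i) / 2 ^ m < t" using lt by blast
    then have ai: "a i = real (K0 + i) / 2 ^ m" unfolding a_def by simp
    have "a (Suc i) = min (real (Suc (K0 + i)) / 2 ^ m) t" unfolding a_def by simp
    then show "f (K0 + i) = \<sigma> (X (a i) \<omega>) * (W (a (Suc i)) \<omega> - W (a i) \<omega>)"
      unfolding f_def ai by simp
  qed
  finally show "S m t \<omega> - S m s \<omega> = (\<Sum>i<n. \<sigma> (X (a i) \<omega>) * (W (a (Suc i)) \<omega> - W (a i) \<omega>))" .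
qed

lemma cl_meas[measurable]: "cl R \<in> borel_measurable borel"
  unfolding cl_def by measurable

lemma Bb_nonneg: "0 \<le> Bb" using bB[of 0] by linarith

lemma key:
  assumes t: "0 < t" and sj: "s = real j / 2 ^ m0" and s0: "0 \<le> s" and st: "s < t"
    and R: "0 < R" and sR: "0 < sR" and sRb: "\<And>x. \<bar>x\<bar> \<le> R \<Longrightarrow> sR \<le> \<sigma> x" and \<kappa>: "0 < \<kappa>"
  shows "prob {\<omega>\<in>space M. X t \<omega> = c} \<le> prob (space M - AR t R) + expectation (\<lambda>\<omega>. (Om t R s \<omega>)\<^sup>2) / \<kappa>\<^sup>2
           + 2 * (Bb * (t - s) + 3 * (\<kappa> * sqrt (t - s))) / (sR * sqrt (t - s))"
proof -
  define h where "h = t - s"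
  define \<eta> where "\<eta> = \<kappa> * sqrt h"
  have h: "0 < h" unfolding h_def using st by simp
  have \<eta>: "0 < \<eta>" unfolding \<eta>_def using h \<kappa> by simp
  define \<alpha> where "\<alpha> = prob (space M - AR t R) + expectation (\<lambda>\<omega>. (Om t R s \<omega>)\<^sup>2) / \<kappa>\<^sup>2
           + 2 * (Bb * h + 3 * \<eta>) / (sR * sqrt h)"
  define G1 where "G1 m = {\<omega>\<in>space M. \<bar>S m t \<omega> - Z t \<omega>\<bar> > \<eta>}" for m
  define G2 where "G2 m = {\<omega>\<in>space M. \<bar>S m s \<omega> - Z s \<omega>\<bar> > \<eta>}" for m
  have bound: "prob {\<omega>\<in>space M. X t \<omega> = c} \<le> \<alpha> + prob (G1 m) + prob (G2 m)" if m: "m0 \<le> m" for m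
  proof -
    define K0 where "K0 = j * 2 ^ (m - m0)"
    define n where "n = nat \<lceil>2 ^ m * t\<rceil> - K0"
    define a where "a = (\<lambda>i. min (real (K0 + i) / 2 ^ m) t)"
    note rw = riemann_window[OF sj s0 st m, folded K0_def, folded n_def, folded a_def]
    have a_le: "s \<le> a i" "a i \<le> t" for i
    proof -
      have "real K0 / 2 ^ m \<le> real (K0 + i) / 2 ^ m" by (intro divide_right_mono) simp_all
      then show "s \<le> a i" unfolding a_def using rw(1) st by simp
      show "a i \<le> t" unfolding a_def by simp
    qed
    have a_lt: "a i < a (Suc i)" "a i = real (K0 + i) / 2 ^ m" if "i < n" for i
    proof -
      have lt: "real (K0 + i) / 2 ^ m < t" using rw(2) that by blast
      then show ai: "a i = real (K0 + i) / 2 ^ m" unfolding a_def by simp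
      have "real (K0 + i) / 2 ^ m < real (K0 + Suc i) / 2 ^ m" by (intro divide_strict_right_mono) simp_all
      then show "a i < a (Suc i)" unfolding ai unfolding a_def using lt by simp
    qed
    have a_mono: "mono a" unfolding a_def
      by (intro monoI min.mono divide_right_mono) simp_all
    have a0: "0 \<le> a 0" unfolding a_def using t by simp
    have a_Q: "\<exists>q. q \<in> Qr s t \<and> of_rat q = a i" if "i < n" for i
    proof -
      have "of_rat (of_nat (K0 + i) / 2 ^ m) = a i" using a_lt(2)[OF that] by (simp add: of_rat_divide of_rat_power of_rat_add)
      then show ?thesis unfolding Qr_def using a_le[of i] by (intro exI[of _ "of_nat (K0 + i) / 2 ^ m"]) simp
    qed
    have s_Q: "\<exists>q::rat. real_of_rat q = s \<and> 0 \<le> real_of_rat q \<and> real_of_rat q \<le> t"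
      using sj s0 st by (intro exI[of _ "of_nat j / 2 ^ m0 :: rat"]) (simp add: of_rat_divide of_rat_power)
    define g where "g i \<omega> = \<sigma> (cl R (X (a i) \<omega>)) - \<sigma> (cl R (X s \<omega>))" for i \<omega>
    have g_meas: "g i \<in> borel_measurable (F (a i))" for i
    proof -
      have [measurable]: "X (a i) \<in> borel_measurable (F (a i))" using Xad a_le[of i] s0 by simp
      have [measurable]: "X s \<in> borel_measurable (F (a i))" using F_mono_meas[OF a_le(1) Xad[OF s0]] .
      show ?thesis unfolding g_def by measurable
    qed
    have g_le: "\<bar>g i \<omega>\<bar> \<le> L * min \<bar>X (a i) \<omega> - X s \<omega>\<bar> (2 * R)" for i \<omega>
      unfolding g_def using g_bound R by simp
    have g_C: "\<bar>g i \<omega>\<bar> \<le> L * (2 * R)" for i \<omega>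
      using g_le[of i \<omega>] L_nonneg by (meson min.cobounded2 mult_left_mono order_trans)
    define E' where "E' = mtS a g n"
    have L2: "integrable M (\<lambda>\<omega>. (E' \<omega>)\<^sup>2)"
      "expectation (\<lambda>\<omega>. (E' \<omega>)\<^sup>2) = (\<Sum>i<n. expectation (\<lambda>\<omega>. (g i \<omega>)\<^sup>2) * (a (Suc i) - a i))"
    proof -
      have p1: "\<forall>i<n. a i < a (Suc i)" using a_lt(1) by blast
      have p2: "\<forall>i<n. g i \<in> borel_measurable (F (a i))" using g_meas by blast
      have p3: "\<forall>i<n. \<forall>\<omega>\<in>space M. \<bar>g i \<omega>\<bar> \<le> L * (2 * R)" using g_C by blast
      note mtS_L2[OF a_mono a0 p1 p2 p3]
      then show "integrable M (\<lambda>\<omega>. (E' \<omega>)\<^sup>2)"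
        "expectation (\<lambda>\<omega>. (E' \<omega>)\<^sup>2) = (\<Sum>i<n. expectation (\<lambda>\<omega>. (g i \<omega>)\<^sup>2) * (a (Suc i) - a i))"
        unfolding E'_def by blast+
    qed
    have Om_int: "integrable M (\<lambda>\<omega>. (Om t R s \<omega>)\<^sup>2)"
    proof (rule integrable_const_bound[where B="(L * (2 * R))\<^sup>2"])
      obtain q :: rat where "real_of_rat q = s" "0 \<le> real_of_rat q" "real_of_rat q \<le> t" using s_Q by blast
      then have Qne: "Qr s t \<noteq> {}" unfolding Qr_def by auto
      show "AE x in M. norm ((Om t R s x)\<^sup>2) \<le> (L * (2 * R))\<^sup>2"
        using Om_bounds[OF less_imp_le[OF R] Qne] by (intro AE_I2) (simp add: power_mono)
      show "(\<lambda>\<omega>. (Om t R s \<omega>)\<^sup>2) \<in> borel_measurable M" using Om_meas[OF s0] by simp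
    qed
    have Eg: "expectation (\<lambda>\<omega>. (g i \<omega>)\<^sup>2) \<le> expectation (\<lambda>\<omega>. (Om t R s \<omega>)\<^sup>2)" if i_lt: "i < n" for i
    proof (rule integral_mono[OF _ Om_int])
      show "integrable M (\<lambda>\<omega>. (g i \<omega>)\<^sup>2)"
      proof (rule integrable_const_bound[where B="(L * (2 * R))\<^sup>2"])
        show "AE x in M. norm ((g i x)\<^sup>2) \<le> (L * (2 * R))\<^sup>2"
        proof (rule AE_I2)
          fix x
          have "\<bar>g i x\<bar> ^ 2 \<le> (L * (2 * R)) ^ 2" by (rule power_mono[OF g_C]) simp
          then show "norm ((g i x)\<^sup>2) \<le> (L * (2 * R))\<^sup>2" by simp
        qed
        show "(\<lambda>\<omega>. (g i \<omega>)\<^sup>2) \<in> borel_measurable M" using F_meas_M[OF g_meas[of i]] by simp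
      qed
      fix \<omega> assume "\<omega> \<in> space M"
      obtain q where q: "q \<in> Qr s t" "of_rat q = a i" using a_Q[OF i_lt] by blast
      have "\<bar>g i \<omega>\<bar> \<le> Om t R s \<omega>" using g_le[of i \<omega>] Om_ge[OF q(1), of \<omega> R] unfolding q(2) by linarith
      then have "\<bar>g i \<omega>\<bar> ^ 2 \<le> (Om t R s \<omega>) ^ 2" by (rule power_mono) simp
      then show "(g i \<omega>)\<^sup>2 \<le> (Om t R s \<omega>)\<^sup>2" by simp
    qed
    have EE: "expectation (\<lambda>\<omega>. (E' \<omega>)\<^sup>2) \<le> expectation (\<lambda>\<omega>. (Om t R s \<omega>)\<^sup>2) * h"
    proof -
      have "expectation (\<lambda>\<omega>. (E' \<omega>)\<^sup>2) \<le> (\<Sum>i<n. expectation (\<lambda>\<omega>. (Om t R s \<omega>)\<^sup>2) * (a (Suc i) - a i))"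
        unfolding L2(2) using a_lt Eg by (intro sum_mono mult_right_mono) (auto simp: less_imp_le)
      also have "\<dots> = expectation (\<lambda>\<omega>. (Om t R s \<omega>)\<^sup>2) * (a n - a 0)"
        by (simp add: sum_distrib_left[symmetric] sum_lessThan_telescope)
      also have "a n - a 0 = h" unfolding h_def a_def using rw(3,4) by simp
      finally show ?thesis .
    qed
    define G3 where "G3 = {\<omega>\<in>space M. \<bar>E' \<omega>\<bar> > \<eta>}"
    have E'_meas: "E' \<in> borel_measurable M"
      unfolding E'_def using F_meas_M[OF mtS_meas[OF a_mono a0, of n g]] g_meas by auto
    have PG3: "prob G3 \<le> expectation (\<lambda>\<omega>. (Om t R s \<omega>)\<^sup>2) / \<kappa>\<^sup>2"
    proof -
      have "G3 \<subseteq> {\<omega>\<in>space M. \<eta>\<^sup>2 \<le> (E' \<omega>)\<^sup>2}"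
        unfolding G3_def using \<eta> by (auto simp: abs_le_square_iff[symmetric] intro: less_imp_le)
      then have "prob G3 \<le> prob {\<omega>\<in>space M. \<eta>\<^sup>2 \<le> (E' \<omega>)\<^sup>2}"
        by (intro finite_measure_mono) (use E'_meas in measurable)
      also have "\<dots> \<le> expectation (\<lambda>\<omega>. (E' \<omega>)\<^sup>2) / \<eta>\<^sup>2"
        by (rule integral_Markov_inequality_measure[OF L2(1), where A="space M"]) (use \<eta> in auto)
      also have "\<dots> \<le> expectation (\<lambda>\<omega>. (Om t R s \<omega>)\<^sup>2) * h / \<eta>\<^sup>2"
        using EE \<eta> by (simp add: divide_right_mono)
      also have "\<dots> = expectation (\<lambda>\<omega>. (Om t R s \<omega>)\<^sup>2) / \<kappa>\<^sup>2"
        unfolding \<eta>_def using h \<kappa> by (simp add: power_mult_distrib)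
      finally show ?thesis .
    qed
    define r where "r = (Bb * h + 3 * \<eta>) / sR"
    define V where "V \<omega> = (c - X s \<omega>) / \<sigma> (X s \<omega>)" for \<omega>
    define N where "N = {\<omega>\<in>space M. \<bar>(W t \<omega> - W s \<omega>) - V \<omega>\<bar> \<le> r}"
    have r0: "0 \<le> r" unfolding r_def using Bb_nonneg h \<eta> sR by simp
    have V_meas: "V \<in> borel_measurable (F s)"
    proof -
      have [measurable]: "X s \<in> borel_measurable (F s)" using Xad[OF s0] .
      show ?thesis unfolding V_def by measurable
    qed
    have PN: "prob N \<le> 2 * r / sqrt h"
      unfolding N_def h_def by (rule dW_near[OF s0 st V_meas r0])
    have sets: "G1 m \<in> sets M" "G2 m \<in> sets M" "G3 \<in> sets M" "N \<in> sets M" "space M - AR t R \<in> sets M"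
    proof -
      have [measurable]: "S m t \<in> borel_measurable M" "Z t \<in> borel_measurable M"
        "S m s \<in> borel_measurable M" "Z s \<in> borel_measurable M" "E' \<in> borel_measurable M"
        "V \<in> borel_measurable M" "W t \<in> borel_measurable M" "W s \<in> borel_measurable M"
        using S_meas Z_meas t s0 E'_meas F_meas_M[OF V_meas] W_meas by auto
      show "G1 m \<in> sets M" "G2 m \<in> sets M" "G3 \<in> sets M" "N \<in> sets M"
        unfolding G1_def G2_def G3_def N_def by measurable
      show "space M - AR t R \<in> sets M" using AR_sets by auto
    qed
    have incl: "{\<omega>\<in>space M. X t \<omega> = c} \<subseteq> (space M - AR t R) \<union> G1 m \<union> G2 m \<union> G3 \<union> N"
    proof
      fix \<omega> assume "\<omega> \<in> {\<omega>\<in>space M. X t \<omega> = c}"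
      then have \<omega>: "\<omega> \<in> space M" and Xtc: "X t \<omega> = c" by auto
      show "\<omega> \<in> (space M - AR t R) \<union> G1 m \<union> G2 m \<union> G3 \<union> N"
      proof (rule ccontr)
        assume "\<omega> \<notin> (space M - AR t R) \<union> G1 m \<union> G2 m \<union> G3 \<union> N"
        then have inA: "\<omega> \<in> AR t R" and n1: "\<bar>S m t \<omega> - Z t \<omega>\<bar> \<le> \<eta>" and n2: "\<bar>S m s \<omega> - Z s \<omega>\<bar> \<le> \<eta>"
          and n3: "\<bar>E' \<omega>\<bar> \<le> \<eta>" and nN: "\<omega> \<notin> N"
          unfolding G1_def G2_def G3_def using \<omega> by auto
        have XR: "\<bar>X u \<omega>\<bar> \<le> R" if "\<exists>q::rat. real_of_rat q = u \<and> 0 \<le> real_of_rat q \<and> real_of_rat q \<le> t" for u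
          using that inA unfolding AR_def by blast
        have Xai: "\<bar>X (a i) \<omega>\<bar> \<le> R" if i_lt: "i < n" for i
        proof (rule XR)
          obtain q where q: "q \<in> Qr s t" "of_rat q = a i" using a_Q[OF i_lt] by blast
          then have "0 \<le> real_of_rat q" "real_of_rat q \<le> t" using s0 unfolding Qr_def by auto
          then show "\<exists>q::rat. real_of_rat q = a i \<and> 0 \<le> real_of_rat q \<and> real_of_rat q \<le> t" using q(2) by blast
        qed
        have Xs: "\<bar>X s \<omega>\<bar> \<le> R" by (rule XR[OF s_Q])
        define Y where "Y = X s \<omega>"
        define dW where "dW = W t \<omega> - W s \<omega>"
        have E'eq: "E' \<omega> = (\<Sum>i<n. (\<sigma> (X (a i) \<omega>) - \<sigma> Y) * (W (a (Suc i)) \<omega> - W (a i) \<omega>))"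
          unfolding E'_def mtS_def g_def Y_def using Xai Xs by (intro sum.cong refl) (simp add: cl_id)
        have an: "a n = t" "a 0 = s" unfolding a_def using rw(3,4) by simp_all
        have tele: "(\<Sum>i<n. \<sigma> Y * (W (a (Suc i)) \<omega> - W (a i) \<omega>)) = \<sigma> Y * dW"
          unfolding sum_distrib_left[symmetric] sum_lessThan_telescope[of "\<lambda>i. W (a i) \<omega>"] an dW_def ..
        have "S m t \<omega> - S m s \<omega> = (\<Sum>i<n. \<sigma> (X (a i) \<omega>) * (W (a (Suc i)) \<omega> - W (a i) \<omega>))"
          using rw(5)[OF \<omega>] unfolding a_def .
        also have "\<dots> = (\<Sum>i<n. \<sigma> Y * (W (a (Suc i)) \<omega> - W (a i) \<omega>)) + E' \<omega>"
          unfolding E'eq sum.distrib[symmetric] by (intro sum.cong refl) (simp add: algebra_simps)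
        finally have SS: "S m t \<omega> - S m s \<omega> = \<sigma> Y * dW + E' \<omega>" unfolding tele .
        have dr: "\<bar>(LBINT u=0..t. b (X u \<omega>)) - (LBINT u=0..s. b (X u \<omega>))\<bar> \<le> Bb * h"
          unfolding h_def by (rule drift_bound[where X=X and \<omega>=\<omega> and b=b and B=Bb and s=s and t=t, OF Xc[OF \<omega>] b_meas bB s0 less_imp_le[OF st]])
        have ZZ: "Z t \<omega> - Z s \<omega> = c - Y - ((LBINT u=0..t. b (X u \<omega>)) - (LBINT u=0..s. b (X u \<omega>)))"
          unfolding Z_def Y_def Xtc by simp
        have num: "\<bar>\<sigma> Y * dW - (c - Y)\<bar> \<le> Bb * h + 3 * \<eta>"
          using SS ZZ dr n1 n2 n3 by (simp add: abs_le_iff)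
        have sY: "sR \<le> \<sigma> Y" using sRb Xs unfolding Y_def by blast
        then have sY0: "0 < \<sigma> Y" using sR by linarith
        have "\<bar>dW - V \<omega>\<bar> = \<bar>\<sigma> Y * dW - (c - Y)\<bar> / \<sigma> Y"
          unfolding V_def Y_def[symmetric] using sY0 by (simp add: field_simps abs_divide)
        also have "\<dots> \<le> (Bb * h + 3 * \<eta>) / \<sigma> Y" using num sY0 by (simp add: divide_right_mono)
        also have "\<dots> \<le> (Bb * h + 3 * \<eta>) / sR"
          using sY sR Bb_nonneg h \<eta> by (intro divide_left_mono) auto
        finally have "\<omega> \<in> N" unfolding N_def r_def dW_def using \<omega> by simp
        then show False using nN by simp
      qed
    qed
    have "prob {\<omega>\<in>space M. X t \<omega> = c} \<le> prob ((space M - AR t R) \<union> G1 m \<union> G2 m \<union> G3 \<union> N)"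
      using incl sets by (intro finite_measure_mono) auto
    also have "\<dots> \<le> prob (space M - AR t R) + prob (G1 m) + prob (G2 m) + prob G3 + prob N"
    proof -
      let ?A = "space M - AR t R"
      have "prob (?A \<union> G1 m \<union> G2 m \<union> G3 \<union> N) \<le> prob (?A \<union> G1 m \<union> G2 m \<union> G3) + prob N"
        using sets by (intro measure_Un_le) auto
      moreover have "prob (?A \<union> G1 m \<union> G2 m \<union> G3) \<le> prob (?A \<union> G1 m \<union> G2 m) + prob G3"
        using sets by (intro measure_Un_le) auto
      moreover have "prob (?A \<union> G1 m \<union> G2 m) \<le> prob (?A \<union> G1 m) + prob (G2 m)"
        using sets by (intro measure_Un_le) auto
      moreover have "prob (?A \<union> G1 m) \<le> prob ?A + prob (G1 m)"
        using sets by (intro measure_Un_le) auto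
      ultimately show ?thesis by linarith
    qed
    also have "\<dots> \<le> prob (space M - AR t R) + prob (G1 m) + prob (G2 m) + expectation (\<lambda>\<omega>. (Om t R s \<omega>)\<^sup>2) / \<kappa>\<^sup>2 + 2 * r / sqrt h"
      using PG3 PN by simp
    also have "2 * r / sqrt h = 2 * (Bb * h + 3 * \<eta>) / (sR * sqrt h)" unfolding r_def by simp
    finally show ?thesis unfolding \<alpha>_def by simp
  qed
  have "(\<lambda>m. \<alpha> + prob (G1 m) + prob (G2 m)) \<longlonglongrightarrow> \<alpha> + 0 + 0"
    unfolding G1_def G2_def using conv[OF less_imp_le[OF t] \<eta>] conv[OF s0 \<eta>]
    by (intro tendsto_add tendsto_const)
  then have "prob {\<omega>\<in>space M. X t \<omega> = c} \<le> \<alpha> + 0 + 0"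
    by (rule tendsto_lowerbound) (use bound in \<open>auto simp: eventually_sequentially\<close>)
  then show ?thesis unfolding \<alpha>_def h_def \<eta>_def by simp
qed

end

context sde begin

lemma noatom:
  assumes t: "0 < t"
  shows "prob {\<omega>\<in>space M. X t \<omega> = c} = 0"
proof -
  let ?P = "prob {\<omega>\<in>space M. X t \<omega> = c}"
  have "?P \<le> 0 + \<epsilon>" if e: "0 < \<epsilon>" for \<epsilon>
  proof -
    have e4: "0 < \<epsilon> / 4" using e by simp
    have "eventually (\<lambda>k. prob (space M - AR t (real k)) < \<epsilon> / 4) sequentially"
      using AR_lim[of t] e4 by (rule order_tendstoD)
    moreover have "eventually (\<lambda>k. (1::nat) \<le> k) sequentially" by (rule eventually_ge_at_top)
    ultimately obtain k where k: "prob (space M - AR t (real k)) < \<epsilon> / 4" "1 \<le> k"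
      using eventually_conj eventually_happens' by (metis (no_types, lifting) sequentially_bot)
    define R where "R = real k"
    have R: "0 < R" unfolding R_def using k by simp
    obtain sR where sR: "0 < sR" "\<And>x. \<bar>x\<bar> \<le> R \<Longrightarrow> sR \<le> \<sigma> x" using sigma_lower[OF R] by blast
    define \<kappa> where "\<kappa> = \<epsilon> * sR / 24"
    have \<kappa>: "0 < \<kappa>" unfolding \<kappa>_def using e sR by simp
    have ev1: "eventually (\<lambda>q. expectation (\<lambda>\<omega>. (Om t R (sq t q) \<omega>)\<^sup>2) < \<kappa>\<^sup>2 * (\<epsilon> / 4)) sequentially"
      using Om_L2_lim[OF t less_imp_le[OF R]] by (rule order_tendstoD) (use \<kappa> e4 in simp)
    have "(\<lambda>q. 2 * Bb * sqrt (t - sq t q) / sR) \<longlonglongrightarrow> 2 * Bb * sqrt (t - t) / sR"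
      by (intro tendsto_intros sq_tendsto[OF t]) (use sR in simp)
    then have "(\<lambda>q. 2 * Bb * sqrt (t - sq t q) / sR) \<longlonglongrightarrow> 0" by simp
    then have ev2: "eventually (\<lambda>q. 2 * Bb * sqrt (t - sq t q) / sR < \<epsilon> / 4) sequentially"
      using e4 by (rule order_tendstoD)
    obtain q where q1: "expectation (\<lambda>\<omega>. (Om t R (sq t q) \<omega>)\<^sup>2) < \<kappa>\<^sup>2 * (\<epsilon> / 4)"
      and q2: "2 * Bb * sqrt (t - sq t q) / sR < \<epsilon> / 4"
      using eventually_happens'[OF _ eventually_conj[OF ev1 ev2]] by auto
    define s where "s = sq t q"
    have s: "0 \<le> s" "s < t" "s = real (nat (\<lceil>2 ^ q * t\<rceil> - 1)) / 2 ^ q"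
      unfolding s_def using sq_props[OF t] by (auto simp: sq_def)
    define h where "h = t - s"
    have h: "0 < h" unfolding h_def using s by simp
    have "?P \<le> prob (space M - AR t R) + expectation (\<lambda>\<omega>. (Om t R s \<omega>)\<^sup>2) / \<kappa>\<^sup>2
           + 2 * (Bb * (t - s) + 3 * (\<kappa> * sqrt (t - s))) / (sR * sqrt (t - s))"
      by (rule key[OF t s(3) s(1) s(2) R sR(1) sR(2) \<kappa>])
    also have "2 * (Bb * (t - s) + 3 * (\<kappa> * sqrt (t - s))) / (sR * sqrt (t - s)) = 2 * Bb * sqrt h / sR + 6 * \<kappa> / sR"
    proof -
      have sh: "0 < sqrt h" using h by simp
      have "h = sqrt h * sqrt h" using h by simp
      then have "Bb * h = Bb * sqrt h * sqrt h" by simp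
      then show ?thesis unfolding h_def[symmetric] using sh sR(1) by (simp add: field_simps)
    qed
    also have "6 * \<kappa> / sR = \<epsilon> / 4" unfolding \<kappa>_def using sR(1) by simp
    also have "expectation (\<lambda>\<omega>. (Om t R s \<omega>)\<^sup>2) / \<kappa>\<^sup>2 < \<epsilon> / 4"
      using q1 \<kappa> unfolding s_def by (simp add: divide_less_eq mult.commute)
    finally show ?thesis using k(1) q2 unfolding R_def h_def s_def by simp
  qed
  then have "?P \<le> 0" by (rule field_le_epsilon)
  then show ?thesis using measure_nonneg[of M] by (simp add: order_antisym)
qed

end

theorem lemma6p22:
  fixes M :: "'w measure" and W X :: "real \<Rightarrow> 'w \<Rightarrow> real"
    and b \<sigma> :: "real \<Rightarrow> real" and \<xi> :: real
    and I :: "'a::finite \<Rightarrow> real set" and p :: "'a pform" and t :: real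
  assumes BM: "brownian_motion M W"
    and sigma_nondeg: "\<And>K. compact K \<Longrightarrow> K \<noteq> {} \<Longrightarrow> Inf (\<sigma> ` K) > 0"
    and sigma_lip: "\<exists>C. C-lipschitz_on UNIV \<sigma>"
    and b_meas: "b \<in> borel_measurable borel"
    and b_bdd: "bounded (range b)"
    and sol: "strong_solution M W b \<sigma> \<xi> X"
    and atoms_borel: "\<And>a. I a \<in> sets borel"
    and intervals: "\<And>q. \<exists>B. (\<forall>\<omega>\<in>space M. \<forall>s\<ge>0. models I X \<omega> s q \<longleftrightarrow> X s \<omega> \<in> B)
                          \<and> sep_interval_union B"
    and t_pos: "t > 0"
  shows "(AE \<omega> in M. (\<lambda>n. chi_n I X n p \<omega> t) \<longlonglongrightarrow> chi I X p \<omega> t)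
         \<and> (\<lambda>n. measure M {\<omega> \<in> space M. models I X \<omega> (Lambda n t) p})
             \<longlonglongrightarrow> measure M {\<omega> \<in> space M. models I X \<omega> t p}"
proof -
  obtain L where L: "L-lipschitz_on UNIV \<sigma>" using sigma_lip by blast
  obtain Bb where Bb: "\<forall>x\<in>range b. norm x \<le> Bb" using b_bdd unfolding bounded_iff by blast
  then have bB: "\<And>x. \<bar>b x\<bar> \<le> Bb" by auto
  interpret sde M W b \<sigma> \<xi> X L Bb
    by unfold_locales (use BM sigma_nondeg L b_meas bB sol in auto)
  show ?thesis
  proof (rule final_from_noatom[OF prob_space_axioms _ _ atoms_borel intervals t_pos])
    show "\<And>u. 0 \<le> u \<Longrightarrow> X u \<in> borel_measurable M" by (rule Xm)
    show "\<And>\<omega>. \<omega> \<in> space M \<Longrightarrow> continuous_on {0..} (\<lambda>u. X u \<omega>)" by (rule Xc)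
    show "\<And>c. measure M {\<omega>\<in>space M. X t \<omega> = c} = 0" by (rule noatom[OF t_pos])
  qed
qed

end
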